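(* For either choice $\zeta\in\{q,-q^{3}\}$ (Fateev–Zamolodchikov or Izergin–Korepin model), the partition function $\mathcal{Z}(\lambda_1,\dots,\lambda_L)=\langle\bar 0|\mathcal{E}(\lambda_L)\cdots\mathcal{E}(\lambda_1)|0\rangle$ is a polynomial in the variables $x_i=e^{2\lambda_i}$ ($1\le i\le L$), symmetric under permutations of $\lambda_1,\dots,\lambda_L$, and of degree $2L-1$ in each variable $x_i$ separately.
   Context: Let $q\in\mathbb{C}\setminus\{0\}$ (with a fixed choice of $q^{1/2}$) and $\zeta\in\{q,-q^3\}$ ($\zeta=q$: Fateev–Zamolodchikov model; $\zeta=-q^3$: Izergin–Korepin model). For $\lambda\in\mathbb{C}$ put $x=e^{2\lambda}$ and define $a(\lambda)=(x-\zeta)(x-q^2)$, $b(\lambda)=q(x-1)(x-\zeta)$, $c(\lambda)=(1-q^2)(x-\zeta)$, $\bar c(\lambda)=x(1-q^2)(x-\zeta)$, and for $\alpha,\beta\in\{1,2,3\}$, with $\beta'=4-\beta$: $d_{\alpha,\beta}(\lambda)=q(x-1)(x-\zeta)+x(q^2-1)(\zeta-1)$ if $\alpha=\beta=2$; $d_{\alpha,\beta}(\lambda)=(x-1)[(x-\zeta)+x(q^2-1)]$ if $\alpha=\beta\neq 2$; $d_{\alpha,\beta}(\lambda)=(q^2-1)[\zeta(x-1)q^{(\alpha-\beta)/2}-\delta_{\alpha,\beta'}(x-\zeta)]$ if $\alpha<\beta$; $d_{\alpha,\beta}(\lambda)=x(q^2-1)[(x-1)q^{(\alpha-\beta)/2}-\delta_{\alpha,\beta'}(x-\zeta)]$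 if $\alpha>\beta$. Let $e_1,e_2,e_3$ be the standard basis of $\mathbb{C}^3$ and $E_{\alpha,\beta}$ the unit matrices. Define $\mathcal{R}(\lambda)\in\mathrm{End}(\mathbb{C}^3\otimes\mathbb{C}^3)$ as the $9\times 9$ matrix in the ordered basis $e_1\otimes e_1,e_1\otimes e_2,e_1\otimes e_3,e_2\otimes e_1,e_2\otimes e_2,e_2\otimes e_3,e_3\otimes e_1,e_3\otimes e_2,e_3\otimes e_3$ (indices $1,\dots,9$) whose only nonzero entries (row, column) are: $(1,1)=a$; $(2,2)=b$, $(2,4)=c$; $(3,3)=d_{1,1}$, $(3,5)=d_{1,2}$, $(3,7)=d_{1,3}$; $(4,2)=\bar c$, $(4,4)=b$; $(5,3)=d_{2,1}$, $(5,5)=d_{2,2}$, $(5,7)=d_{2,3}$; $(6,6)=b$, $(6,8)=c$; $(7,3)=d_{3,1}$, $(7,5)=d_{3,2}$, $(7,7)=d_{3,3}$; $(8,6)=\bar c$, $(8,8)=b$; $(9,9)=a$ (all evaluated at $\lambda$). Fix $L\ge1$ and inhomogeneities $\mu_1,\dots,\mu_L\in\mathbb{C}$. With $V_a=V_1=\dots=V_L=\mathbb{C}^3$, let $\mathcal{T}(\lambda)=\mathcal{R}_{a1}(\lambda-\mu_1)\mathcal{R}_{a2}(\lambda-\mu_2)\cdots\mathcal{R}_{aL}(\lambda-\mu_L)\in\mathrm{End}(V_a\otimes V_1\otimes\cdots\otimes V_L)$, where $\mathcal{R}_{aj}$ acts as $\mathcal{R}$ on $V_a\otimes V_j$. Write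 $\mathcal{T}(\lambda)=\sum_{\alpha,\beta}E_{\alpha,\beta}\otimes\mathcal{T}_\alpha^\beta(\lambda)$ and set $\mathcal{A}(\lambda)=\mathcal{T}_1^1(\lambda)$, $\mathcal{B}(\lambda)=\mathcal{T}_1^2(\lambda)$, $\mathcal{E}(\lambda)=\mathcal{T}_1^3(\lambda)$, operators on $V_1\otimes\cdots\otimes V_L$. Let $|0\rangle=e_1^{\otimes L}$ and let $\langle\bar0|$ be the dual vector of $e_3^{\otimes L}$ (taking the coefficient of $e_3^{\otimes L}$). *)

theory Defs
  imports Complex_Main "HOL-Library.Multiset" "HOL-Library.FuncSet"
begin

text \<open>Parameters: q (nonzero), s a fixed square root of q (so q^{k/2} = s powi k),
  zeta the model parameter. Basis indices of C^3 are 1,2,3.\<close>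

definition dFZ :: "complex \<Rightarrow> complex \<Rightarrow> complex \<Rightarrow> complex \<Rightarrow> nat \<Rightarrow> nat \<Rightarrow> complex" where
  "dFZ q s z x \<alpha> \<beta> =
    (if \<alpha> = 2 \<and> \<beta> = 2 then q * (x - 1) * (x - z) + x * (q^2 - 1) * (z - 1)
     else if \<alpha> = \<beta> then (x - 1) * ((x - z) + x * (q^2 - 1))
     else if \<alpha> < \<beta> then (q^2 - 1) * (z * (x - 1) * s powi (int \<alpha> - int \<beta>)
                                   - (if \<alpha> = 4 - \<beta> then 1 else 0) * (x - z))
     else x * (q^2 - 1) * ((x - 1) * s powi (int \<alpha> - int \<beta>)
                           - (if \<alpha> = 4 - \<beta> then 1 else 0) * (x - z)))"

definition Rmat :: "complex \<Rightarrow> complex \<Rightarrow> complex \<Rightarrow> complex \<Rightarrow> nat \<Rightarrow> nat \<Rightarrow> complex" where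
  "Rmat q s z lam r c =
    (let x = exp (2 * lam);
         a = (x - z) * (x - q^2);
         b = q * (x - 1) * (x - z);
         cc = (1 - q^2) * (x - z);
         cb = x * (1 - q^2) * (x - z);
         d = dFZ q s z x
     in if (r, c) = (1, 1) then a
        else if (r, c) = (2, 2) then b
        else if (r, c) = (2, 4) then cc
        else if (r, c) = (3, 3) then d 1 1
        else if (r, c) = (3, 5) then d 1 2
        else if (r, c) = (3, 7) then d 1 3
        else if (r, c) = (4, 2) then cb
        else if (r, c) = (4, 4) then b
        else if (r, c) = (5, 3) then d 2 1
        else if (r, c) = (5, 5) then d 2 2
        else if (r, c) = (5, 7) then d 2 3
        else if (r, c) = (6, 6) then b
        else if (r, c) = (6, 8) then cc
        else if (r, c) = (7, 3) then d 3 1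
        else if (r, c) = (7, 5) then d 3 2
        else if (r, c) = (7, 7) then d 3 3
        else if (r, c) = (8, 6) then cb
        else if (r, c) = (8, 8) then b
        else if (r, c) = (9, 9) then a
        else 0)"

text \<open>Matrix element <e_alpha (x) e_i| R(lam) |e_beta (x) e_j>, alpha,i,beta,j in {1,2,3}.\<close>
definition Rent :: "complex \<Rightarrow> complex \<Rightarrow> complex \<Rightarrow> complex \<Rightarrow> nat \<Rightarrow> nat \<Rightarrow> nat \<Rightarrow> nat \<Rightarrow> complex" where
  "Rent q s z lam \<alpha> i \<beta> j = Rmat q s z lam (3 * (\<alpha> - 1) + i) (3 * (\<beta> - 1) + j)"

text \<open>Matrix element <i_1..i_n| T_alpha^beta(lam) |j_1..j_n> of the monodromy matrix
  R_{a1}(lam-mu_1) ... R_{an}(lam-mu_n); the list of inhomogeneities is mus.\<close>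
fun Tmono :: "complex \<Rightarrow> complex \<Rightarrow> complex \<Rightarrow> complex \<Rightarrow> complex list \<Rightarrow> nat \<Rightarrow> nat
               \<Rightarrow> nat list \<Rightarrow> nat list \<Rightarrow> complex" where
  "Tmono q s z lam [] \<alpha> \<beta> [] [] = (if \<alpha> = \<beta> then 1 else 0)"
| "Tmono q s z lam (mu # ms) \<alpha> \<beta> (i # is) (j # js) =
     (\<Sum>\<gamma>\<in>{1,2,3}. Rent q s z (lam - mu) \<alpha> i \<gamma> j * Tmono q s z lam ms \<gamma> \<beta> is js)"
| "Tmono q s z lam _ \<alpha> \<beta> _ _ = 0"

text \<open>Basis states of V_1 (x) ... (x) V_L.\<close>
definition states :: "nat \<Rightarrow> nat list set" where
  "states L = {xs. length xs = L \<and> set xs \<subseteq> {1, 2, 3}}"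

text \<open>Action of E(lam) = T_1^3(lam) on a vector (given by its coordinates).\<close>
definition applyE :: "complex \<Rightarrow> complex \<Rightarrow> complex \<Rightarrow> complex list \<Rightarrow> complex
                      \<Rightarrow> (nat list \<Rightarrow> complex) \<Rightarrow> (nat list \<Rightarrow> complex)" where
  "applyE q s z mus lam v = (\<lambda>is. \<Sum>js\<in>states (length mus). Tmono q s z lam mus 1 3 is js * v js)"

text \<open>Z(lam_1..lam_L) = <0bar| E(lam_L) ... E(lam_1) |0>, lams = [lam_1, ..., lam_L].\<close>
definition Zpart :: "complex \<Rightarrow> complex \<Rightarrow> complex \<Rightarrow> complex list \<Rightarrow> complex list \<Rightarrow> complex" where
  "Zpart q s z mus lams =
     foldl (\<lambda>v lam. applyE q s z mus lam v)
           (\<lambda>js. if js = replicate (length mus) 1 then 1 else 0) lams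
       (replicate (length mus) 3)"

end

theory Submission
  imports Defs "HOL-Computational_Algebra.Polynomial"
begin

definition RX :: "complex \<Rightarrow> complex \<Rightarrow> complex \<Rightarrow> complex \<Rightarrow> nat \<Rightarrow> nat \<Rightarrow> complex" where
  "RX q s z x r c =
    (let a = (x - z) * (x - q^2);
         b = q * (x - 1) * (x - z);
         cc = (1 - q^2) * (x - z);
         cb = x * (1 - q^2) * (x - z);
         d = dFZ q s z x
     in if (r, c) = (1, 1) then a
        else if (r, c) = (2, 2) then b
        else if (r, c) = (2, 4) then cc
        else if (r, c) = (3, 3) then d 1 1
        else if (r, c) = (3, 5) then d 1 2
        else if (r, c) = (3, 7) then d 1 3
        else if (r, c) = (4, 2) then cb
        else if (r, c) = (4, 4) then b
        else if (r, c) = (5, 3) then d 2 1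
        else if (r, c) = (5, 5) then d 2 2
        else if (r, c) = (5, 7) then d 2 3
        else if (r, c) = (6, 6) then b
        else if (r, c) = (6, 8) then cc
        else if (r, c) = (7, 3) then d 3 1
        else if (r, c) = (7, 5) then d 3 2
        else if (r, c) = (7, 7) then d 3 3
        else if (r, c) = (8, 6) then cb
        else if (r, c) = (8, 8) then b
        else if (r, c) = (9, 9) then a
        else 0)"

lemma Rmat_RX: "Rmat q s z lam r c = RX q s z (exp (2*lam)) r c"
  unfolding Rmat_def RX_def Let_def by simp

definition RE where "RE q s z x \<alpha> i \<beta> j = RX q s z x (3 * (\<alpha> - 1) + i) (3 * (\<beta> - 1) + j)"

definition REF where "REF s x \<alpha> i \<beta> j = RE (s^2) s (s^2) x \<alpha> i \<beta> j"
definition REI where "REI s x \<alpha> i \<beta> j = RE (s^2) s (-(s^6)) x \<alpha> i \<beta> j"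
lemma REF_1111[simp]: "s \<noteq> 0 \<Longrightarrow> REF s x 1 1 1 1 = (x - s^2) * (x - s^4)"
  by (simp add: REF_def RE_def RX_def dFZ_def Let_def power_int_minus field_simps; algebra?)

lemma REF_1112[simp]: "s \<noteq> 0 \<Longrightarrow> REF s x 1 1 1 2 = 0"
  by (simp add: REF_def RE_def RX_def dFZ_def Let_def power_int_minus field_simps; algebra?)

lemma REF_1113[simp]: "s \<noteq> 0 \<Longrightarrow> REF s x 1 1 1 3 = 0"
  by (simp add: REF_def RE_def RX_def dFZ_def Let_def power_int_minus field_simps; algebra?)

lemma REF_1121[simp]: "s \<noteq> 0 \<Longrightarrow> REF s x 1 1 2 1 = 0"
  by (simp add: REF_def RE_def RX_def dFZ_def Let_def power_int_minus field_simps; algebra?)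

lemma REF_1122[simp]: "s \<noteq> 0 \<Longrightarrow> REF s x 1 1 2 2 = 0"
  by (simp add: REF_def RE_def RX_def dFZ_def Let_def power_int_minus field_simps; algebra?)

lemma REF_1123[simp]: "s \<noteq> 0 \<Longrightarrow> REF s x 1 1 2 3 = 0"
  by (simp add: REF_def RE_def RX_def dFZ_def Let_def power_int_minus field_simps; algebra?)

lemma REF_1131[simp]: "s \<noteq> 0 \<Longrightarrow> REF s x 1 1 3 1 = 0"
  by (simp add: REF_def RE_def RX_def dFZ_def Let_def power_int_minus field_simps; algebra?)

lemma REF_1132[simp]: "s \<noteq> 0 \<Longrightarrow> REF s x 1 1 3 2 = 0"
  by (simp add: REF_def RE_def RX_def dFZ_def Let_def power_int_minus field_simps; algebra?)

lemma REF_1133[simp]: "s \<noteq> 0 \<Longrightarrow> REF s x 1 1 3 3 = 0"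
  by (simp add: REF_def RE_def RX_def dFZ_def Let_def power_int_minus field_simps; algebra?)

lemma REF_1211[simp]: "s \<noteq> 0 \<Longrightarrow> REF s x 1 2 1 1 = 0"
  by (simp add: REF_def RE_def RX_def dFZ_def Let_def power_int_minus field_simps; algebra?)

lemma REF_1212[simp]: "s \<noteq> 0 \<Longrightarrow> REF s x 1 2 1 2 = s^2 * (x - 1) * (x - s^2)"
  by (simp add: REF_def RE_def RX_def dFZ_def Let_def power_int_minus field_simps; algebra?)

lemma REF_1213[simp]: "s \<noteq> 0 \<Longrightarrow> REF s x 1 2 1 3 = 0"
  by (simp add: REF_def RE_def RX_def dFZ_def Let_def power_int_minus field_simps; algebra?)

lemma REF_1221[simp]: "s \<noteq> 0 \<Longrightarrow> REF s x 1 2 2 1 = (1 - s^4) * (x - s^2)"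
  by (simp add: REF_def RE_def RX_def dFZ_def Let_def power_int_minus field_simps; algebra?)

lemma REF_1222[simp]: "s \<noteq> 0 \<Longrightarrow> REF s x 1 2 2 2 = 0"
  by (simp add: REF_def RE_def RX_def dFZ_def Let_def power_int_minus field_simps; algebra?)

lemma REF_1223[simp]: "s \<noteq> 0 \<Longrightarrow> REF s x 1 2 2 3 = 0"
  by (simp add: REF_def RE_def RX_def dFZ_def Let_def power_int_minus field_simps; algebra?)

lemma REF_1231[simp]: "s \<noteq> 0 \<Longrightarrow> REF s x 1 2 3 1 = 0"
  by (simp add: REF_def RE_def RX_def dFZ_def Let_def power_int_minus field_simps; algebra?)

lemma REF_1232[simp]: "s \<noteq> 0 \<Longrightarrow> REF s x 1 2 3 2 = 0"
  by (simp add: REF_def RE_def RX_def dFZ_def Let_def power_int_minus field_simps; algebra?)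

lemma REF_1233[simp]: "s \<noteq> 0 \<Longrightarrow> REF s x 1 2 3 3 = 0"
  by (simp add: REF_def RE_def RX_def dFZ_def Let_def power_int_minus field_simps; algebra?)

lemma REF_1311[simp]: "s \<noteq> 0 \<Longrightarrow> REF s x 1 3 1 1 = 0"
  by (simp add: REF_def RE_def RX_def dFZ_def Let_def power_int_minus field_simps; algebra?)

lemma REF_1312[simp]: "s \<noteq> 0 \<Longrightarrow> REF s x 1 3 1 2 = 0"
  by (simp add: REF_def RE_def RX_def dFZ_def Let_def power_int_minus field_simps; algebra?)

lemma REF_1313[simp]: "s \<noteq> 0 \<Longrightarrow> REF s x 1 3 1 3 = (x - 1) * ((x - s^2) + x * (s^4 - 1))"
  by (simp add: REF_def RE_def RX_def dFZ_def Let_def power_int_minus field_simps; algebra?)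

lemma REF_1321[simp]: "s \<noteq> 0 \<Longrightarrow> REF s x 1 3 2 1 = 0"
  by (simp add: REF_def RE_def RX_def dFZ_def Let_def power_int_minus field_simps; algebra?)

lemma REF_1322[simp]: "s \<noteq> 0 \<Longrightarrow> REF s x 1 3 2 2 = (s^4 - 1) * (s * (x - 1))"
  by (simp add: REF_def RE_def RX_def dFZ_def Let_def power_int_minus field_simps; algebra?)

lemma REF_1323[simp]: "s \<noteq> 0 \<Longrightarrow> REF s x 1 3 2 3 = 0"
  by (simp add: REF_def RE_def RX_def dFZ_def Let_def power_int_minus field_simps; algebra?)

lemma REF_1331[simp]: "s \<noteq> 0 \<Longrightarrow> REF s x 1 3 3 1 = (s^4 - 1) * (1 * (x - 1) - (x - s^2))"
  by (simp add: REF_def RE_def RX_def dFZ_def Let_def power_int_minus field_simps; algebra?)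

lemma REF_1332[simp]: "s \<noteq> 0 \<Longrightarrow> REF s x 1 3 3 2 = 0"
  by (simp add: REF_def RE_def RX_def dFZ_def Let_def power_int_minus field_simps; algebra?)

lemma REF_1333[simp]: "s \<noteq> 0 \<Longrightarrow> REF s x 1 3 3 3 = 0"
  by (simp add: REF_def RE_def RX_def dFZ_def Let_def power_int_minus field_simps; algebra?)

lemma REF_2111[simp]: "s \<noteq> 0 \<Longrightarrow> REF s x 2 1 1 1 = 0"
  by (simp add: REF_def RE_def RX_def dFZ_def Let_def power_int_minus field_simps; algebra?)

lemma REF_2112[simp]: "s \<noteq> 0 \<Longrightarrow> REF s x 2 1 1 2 = x * (1 - s^4) * (x - s^2)"
  by (simp add: REF_def RE_def RX_def dFZ_def Let_def power_int_minus field_simps; algebra?)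

lemma REF_2113[simp]: "s \<noteq> 0 \<Longrightarrow> REF s x 2 1 1 3 = 0"
  by (simp add: REF_def RE_def RX_def dFZ_def Let_def power_int_minus field_simps; algebra?)

lemma REF_2121[simp]: "s \<noteq> 0 \<Longrightarrow> REF s x 2 1 2 1 = s^2 * (x - 1) * (x - s^2)"
  by (simp add: REF_def RE_def RX_def dFZ_def Let_def power_int_minus field_simps; algebra?)

lemma REF_2122[simp]: "s \<noteq> 0 \<Longrightarrow> REF s x 2 1 2 2 = 0"
  by (simp add: REF_def RE_def RX_def dFZ_def Let_def power_int_minus field_simps; algebra?)

lemma REF_2123[simp]: "s \<noteq> 0 \<Longrightarrow> REF s x 2 1 2 3 = 0"
  by (simp add: REF_def RE_def RX_def dFZ_def Let_def power_int_minus field_simps; algebra?)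

lemma REF_2131[simp]: "s \<noteq> 0 \<Longrightarrow> REF s x 2 1 3 1 = 0"
  by (simp add: REF_def RE_def RX_def dFZ_def Let_def power_int_minus field_simps; algebra?)

lemma REF_2132[simp]: "s \<noteq> 0 \<Longrightarrow> REF s x 2 1 3 2 = 0"
  by (simp add: REF_def RE_def RX_def dFZ_def Let_def power_int_minus field_simps; algebra?)

lemma REF_2133[simp]: "s \<noteq> 0 \<Longrightarrow> REF s x 2 1 3 3 = 0"
  by (simp add: REF_def RE_def RX_def dFZ_def Let_def power_int_minus field_simps; algebra?)

lemma REF_2211[simp]: "s \<noteq> 0 \<Longrightarrow> REF s x 2 2 1 1 = 0"
  by (simp add: REF_def RE_def RX_def dFZ_def Let_def power_int_minus field_simps; algebra?)

lemma REF_2212[simp]: "s \<noteq> 0 \<Longrightarrow> REF s x 2 2 1 2 = 0"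
  by (simp add: REF_def RE_def RX_def dFZ_def Let_def power_int_minus field_simps; algebra?)

lemma REF_2213[simp]: "s \<noteq> 0 \<Longrightarrow> REF s x 2 2 1 3 = x * (s^4 - 1) * ((x - 1) * s^1)"
  by (simp add: REF_def RE_def RX_def dFZ_def Let_def power_int_minus field_simps; algebra?)

lemma REF_2221[simp]: "s \<noteq> 0 \<Longrightarrow> REF s x 2 2 2 1 = 0"
  by (simp add: REF_def RE_def RX_def dFZ_def Let_def power_int_minus field_simps; algebra?)

lemma REF_2222[simp]: "s \<noteq> 0 \<Longrightarrow> REF s x 2 2 2 2 = s^2 * (x - 1) * (x - s^2) + x * (s^4 - 1) * (s^2 - 1)"
  by (simp add: REF_def RE_def RX_def dFZ_def Let_def power_int_minus field_simps; algebra?)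

lemma REF_2223[simp]: "s \<noteq> 0 \<Longrightarrow> REF s x 2 2 2 3 = 0"
  by (simp add: REF_def RE_def RX_def dFZ_def Let_def power_int_minus field_simps; algebra?)

lemma REF_2231[simp]: "s \<noteq> 0 \<Longrightarrow> REF s x 2 2 3 1 = (s^4 - 1) * (s * (x - 1))"
  by (simp add: REF_def RE_def RX_def dFZ_def Let_def power_int_minus field_simps; algebra?)

lemma REF_2232[simp]: "s \<noteq> 0 \<Longrightarrow> REF s x 2 2 3 2 = 0"
  by (simp add: REF_def RE_def RX_def dFZ_def Let_def power_int_minus field_simps; algebra?)

lemma REF_2233[simp]: "s \<noteq> 0 \<Longrightarrow> REF s x 2 2 3 3 = 0"
  by (simp add: REF_def RE_def RX_def dFZ_def Let_def power_int_minus field_simps; algebra?)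

lemma REF_2311[simp]: "s \<noteq> 0 \<Longrightarrow> REF s x 2 3 1 1 = 0"
  by (simp add: REF_def RE_def RX_def dFZ_def Let_def power_int_minus field_simps; algebra?)

lemma REF_2312[simp]: "s \<noteq> 0 \<Longrightarrow> REF s x 2 3 1 2 = 0"
  by (simp add: REF_def RE_def RX_def dFZ_def Let_def power_int_minus field_simps; algebra?)

lemma REF_2313[simp]: "s \<noteq> 0 \<Longrightarrow> REF s x 2 3 1 3 = 0"
  by (simp add: REF_def RE_def RX_def dFZ_def Let_def power_int_minus field_simps; algebra?)

lemma REF_2321[simp]: "s \<noteq> 0 \<Longrightarrow> REF s x 2 3 2 1 = 0"
  by (simp add: REF_def RE_def RX_def dFZ_def Let_def power_int_minus field_simps; algebra?)

lemma REF_2322[simp]: "s \<noteq> 0 \<Longrightarrow> REF s x 2 3 2 2 = 0"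
  by (simp add: REF_def RE_def RX_def dFZ_def Let_def power_int_minus field_simps; algebra?)

lemma REF_2323[simp]: "s \<noteq> 0 \<Longrightarrow> REF s x 2 3 2 3 = s^2 * (x - 1) * (x - s^2)"
  by (simp add: REF_def RE_def RX_def dFZ_def Let_def power_int_minus field_simps; algebra?)

lemma REF_2331[simp]: "s \<noteq> 0 \<Longrightarrow> REF s x 2 3 3 1 = 0"
  by (simp add: REF_def RE_def RX_def dFZ_def Let_def power_int_minus field_simps; algebra?)

lemma REF_2332[simp]: "s \<noteq> 0 \<Longrightarrow> REF s x 2 3 3 2 = (1 - s^4) * (x - s^2)"
  by (simp add: REF_def RE_def RX_def dFZ_def Let_def power_int_minus field_simps; algebra?)

lemma REF_2333[simp]: "s \<noteq> 0 \<Longrightarrow> REF s x 2 3 3 3 = 0"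
  by (simp add: REF_def RE_def RX_def dFZ_def Let_def power_int_minus field_simps; algebra?)

lemma REF_3111[simp]: "s \<noteq> 0 \<Longrightarrow> REF s x 3 1 1 1 = 0"
  by (simp add: REF_def RE_def RX_def dFZ_def Let_def power_int_minus field_simps; algebra?)

lemma REF_3112[simp]: "s \<noteq> 0 \<Longrightarrow> REF s x 3 1 1 2 = 0"
  by (simp add: REF_def RE_def RX_def dFZ_def Let_def power_int_minus field_simps; algebra?)

lemma REF_3113[simp]: "s \<noteq> 0 \<Longrightarrow> REF s x 3 1 1 3 = x * (s^4 - 1) * ((x - 1) * s^2 - (x - s^2))"
  by (simp add: REF_def RE_def RX_def dFZ_def Let_def power_int_minus field_simps; algebra?)

lemma REF_3121[simp]: "s \<noteq> 0 \<Longrightarrow> REF s x 3 1 2 1 = 0"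
  by (simp add: REF_def RE_def RX_def dFZ_def Let_def power_int_minus field_simps; algebra?)

lemma REF_3122[simp]: "s \<noteq> 0 \<Longrightarrow> REF s x 3 1 2 2 = x * (s^4 - 1) * ((x - 1) * s^1)"
  by (simp add: REF_def RE_def RX_def dFZ_def Let_def power_int_minus field_simps; algebra?)

lemma REF_3123[simp]: "s \<noteq> 0 \<Longrightarrow> REF s x 3 1 2 3 = 0"
  by (simp add: REF_def RE_def RX_def dFZ_def Let_def power_int_minus field_simps; algebra?)

lemma REF_3131[simp]: "s \<noteq> 0 \<Longrightarrow> REF s x 3 1 3 1 = (x - 1) * ((x - s^2) + x * (s^4 - 1))"
  by (simp add: REF_def RE_def RX_def dFZ_def Let_def power_int_minus field_simps; algebra?)

lemma REF_3132[simp]: "s \<noteq> 0 \<Longrightarrow> REF s x 3 1 3 2 = 0"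
  by (simp add: REF_def RE_def RX_def dFZ_def Let_def power_int_minus field_simps; algebra?)

lemma REF_3133[simp]: "s \<noteq> 0 \<Longrightarrow> REF s x 3 1 3 3 = 0"
  by (simp add: REF_def RE_def RX_def dFZ_def Let_def power_int_minus field_simps; algebra?)

lemma REF_3211[simp]: "s \<noteq> 0 \<Longrightarrow> REF s x 3 2 1 1 = 0"
  by (simp add: REF_def RE_def RX_def dFZ_def Let_def power_int_minus field_simps; algebra?)

lemma REF_3212[simp]: "s \<noteq> 0 \<Longrightarrow> REF s x 3 2 1 2 = 0"
  by (simp add: REF_def RE_def RX_def dFZ_def Let_def power_int_minus field_simps; algebra?)

lemma REF_3213[simp]: "s \<noteq> 0 \<Longrightarrow> REF s x 3 2 1 3 = 0"
  by (simp add: REF_def RE_def RX_def dFZ_def Let_def power_int_minus field_simps; algebra?)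

lemma REF_3221[simp]: "s \<noteq> 0 \<Longrightarrow> REF s x 3 2 2 1 = 0"
  by (simp add: REF_def RE_def RX_def dFZ_def Let_def power_int_minus field_simps; algebra?)

lemma REF_3222[simp]: "s \<noteq> 0 \<Longrightarrow> REF s x 3 2 2 2 = 0"
  by (simp add: REF_def RE_def RX_def dFZ_def Let_def power_int_minus field_simps; algebra?)

lemma REF_3223[simp]: "s \<noteq> 0 \<Longrightarrow> REF s x 3 2 2 3 = x * (1 - s^4) * (x - s^2)"
  by (simp add: REF_def RE_def RX_def dFZ_def Let_def power_int_minus field_simps; algebra?)

lemma REF_3231[simp]: "s \<noteq> 0 \<Longrightarrow> REF s x 3 2 3 1 = 0"
  by (simp add: REF_def RE_def RX_def dFZ_def Let_def power_int_minus field_simps; algebra?)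

lemma REF_3232[simp]: "s \<noteq> 0 \<Longrightarrow> REF s x 3 2 3 2 = s^2 * (x - 1) * (x - s^2)"
  by (simp add: REF_def RE_def RX_def dFZ_def Let_def power_int_minus field_simps; algebra?)

lemma REF_3233[simp]: "s \<noteq> 0 \<Longrightarrow> REF s x 3 2 3 3 = 0"
  by (simp add: REF_def RE_def RX_def dFZ_def Let_def power_int_minus field_simps; algebra?)

lemma REF_3311[simp]: "s \<noteq> 0 \<Longrightarrow> REF s x 3 3 1 1 = 0"
  by (simp add: REF_def RE_def RX_def dFZ_def Let_def power_int_minus field_simps; algebra?)

lemma REF_3312[simp]: "s \<noteq> 0 \<Longrightarrow> REF s x 3 3 1 2 = 0"
  by (simp add: REF_def RE_def RX_def dFZ_def Let_def power_int_minus field_simps; algebra?)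

lemma REF_3313[simp]: "s \<noteq> 0 \<Longrightarrow> REF s x 3 3 1 3 = 0"
  by (simp add: REF_def RE_def RX_def dFZ_def Let_def power_int_minus field_simps; algebra?)

lemma REF_3321[simp]: "s \<noteq> 0 \<Longrightarrow> REF s x 3 3 2 1 = 0"
  by (simp add: REF_def RE_def RX_def dFZ_def Let_def power_int_minus field_simps; algebra?)

lemma REF_3322[simp]: "s \<noteq> 0 \<Longrightarrow> REF s x 3 3 2 2 = 0"
  by (simp add: REF_def RE_def RX_def dFZ_def Let_def power_int_minus field_simps; algebra?)

lemma REF_3323[simp]: "s \<noteq> 0 \<Longrightarrow> REF s x 3 3 2 3 = 0"
  by (simp add: REF_def RE_def RX_def dFZ_def Let_def power_int_minus field_simps; algebra?)

lemma REF_3331[simp]: "s \<noteq> 0 \<Longrightarrow> REF s x 3 3 3 1 = 0"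
  by (simp add: REF_def RE_def RX_def dFZ_def Let_def power_int_minus field_simps; algebra?)

lemma REF_3332[simp]: "s \<noteq> 0 \<Longrightarrow> REF s x 3 3 3 2 = 0"
  by (simp add: REF_def RE_def RX_def dFZ_def Let_def power_int_minus field_simps; algebra?)

lemma REF_3333[simp]: "s \<noteq> 0 \<Longrightarrow> REF s x 3 3 3 3 = (x - s^2) * (x - s^4)"
  by (simp add: REF_def RE_def RX_def dFZ_def Let_def power_int_minus field_simps; algebra?)

lemma REI_1111[simp]: "s \<noteq> 0 \<Longrightarrow> REI s x 1 1 1 1 = (x - (- (s^6))) * (x - s^4)"
  by (simp add: REI_def RE_def RX_def dFZ_def Let_def power_int_minus field_simps; algebra?)

lemma REI_1112[simp]: "s \<noteq> 0 \<Longrightarrow> REI s x 1 1 1 2 = 0"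
  by (simp add: REI_def RE_def RX_def dFZ_def Let_def power_int_minus field_simps; algebra?)

lemma REI_1113[simp]: "s \<noteq> 0 \<Longrightarrow> REI s x 1 1 1 3 = 0"
  by (simp add: REI_def RE_def RX_def dFZ_def Let_def power_int_minus field_simps; algebra?)

lemma REI_1121[simp]: "s \<noteq> 0 \<Longrightarrow> REI s x 1 1 2 1 = 0"
  by (simp add: REI_def RE_def RX_def dFZ_def Let_def power_int_minus field_simps; algebra?)

lemma REI_1122[simp]: "s \<noteq> 0 \<Longrightarrow> REI s x 1 1 2 2 = 0"
  by (simp add: REI_def RE_def RX_def dFZ_def Let_def power_int_minus field_simps; algebra?)

lemma REI_1123[simp]: "s \<noteq> 0 \<Longrightarrow> REI s x 1 1 2 3 = 0"
  by (simp add: REI_def RE_def RX_def dFZ_def Let_def power_int_minus field_simps; algebra?)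

lemma REI_1131[simp]: "s \<noteq> 0 \<Longrightarrow> REI s x 1 1 3 1 = 0"
  by (simp add: REI_def RE_def RX_def dFZ_def Let_def power_int_minus field_simps; algebra?)

lemma REI_1132[simp]: "s \<noteq> 0 \<Longrightarrow> REI s x 1 1 3 2 = 0"
  by (simp add: REI_def RE_def RX_def dFZ_def Let_def power_int_minus field_simps; algebra?)

lemma REI_1133[simp]: "s \<noteq> 0 \<Longrightarrow> REI s x 1 1 3 3 = 0"
  by (simp add: REI_def RE_def RX_def dFZ_def Let_def power_int_minus field_simps; algebra?)

lemma REI_1211[simp]: "s \<noteq> 0 \<Longrightarrow> REI s x 1 2 1 1 = 0"
  by (simp add: REI_def RE_def RX_def dFZ_def Let_def power_int_minus field_simps; algebra?)

lemma REI_1212[simp]: "s \<noteq> 0 \<Longrightarrow> REI s x 1 2 1 2 = s^2 * (x - 1) * (x - (- (s^6)))"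
  by (simp add: REI_def RE_def RX_def dFZ_def Let_def power_int_minus field_simps; algebra?)

lemma REI_1213[simp]: "s \<noteq> 0 \<Longrightarrow> REI s x 1 2 1 3 = 0"
  by (simp add: REI_def RE_def RX_def dFZ_def Let_def power_int_minus field_simps; algebra?)

lemma REI_1221[simp]: "s \<noteq> 0 \<Longrightarrow> REI s x 1 2 2 1 = (1 - s^4) * (x - (- (s^6)))"
  by (simp add: REI_def RE_def RX_def dFZ_def Let_def power_int_minus field_simps; algebra?)

lemma REI_1222[simp]: "s \<noteq> 0 \<Longrightarrow> REI s x 1 2 2 2 = 0"
  by (simp add: REI_def RE_def RX_def dFZ_def Let_def power_int_minus field_simps; algebra?)

lemma REI_1223[simp]: "s \<noteq> 0 \<Longrightarrow> REI s x 1 2 2 3 = 0"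
  by (simp add: REI_def RE_def RX_def dFZ_def Let_def power_int_minus field_simps; algebra?)

lemma REI_1231[simp]: "s \<noteq> 0 \<Longrightarrow> REI s x 1 2 3 1 = 0"
  by (simp add: REI_def RE_def RX_def dFZ_def Let_def power_int_minus field_simps; algebra?)

lemma REI_1232[simp]: "s \<noteq> 0 \<Longrightarrow> REI s x 1 2 3 2 = 0"
  by (simp add: REI_def RE_def RX_def dFZ_def Let_def power_int_minus field_simps; algebra?)

lemma REI_1233[simp]: "s \<noteq> 0 \<Longrightarrow> REI s x 1 2 3 3 = 0"
  by (simp add: REI_def RE_def RX_def dFZ_def Let_def power_int_minus field_simps; algebra?)

lemma REI_1311[simp]: "s \<noteq> 0 \<Longrightarrow> REI s x 1 3 1 1 = 0"
  by (simp add: REI_def RE_def RX_def dFZ_def Let_def power_int_minus field_simps; algebra?)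

lemma REI_1312[simp]: "s \<noteq> 0 \<Longrightarrow> REI s x 1 3 1 2 = 0"
  by (simp add: REI_def RE_def RX_def dFZ_def Let_def power_int_minus field_simps; algebra?)

lemma REI_1313[simp]: "s \<noteq> 0 \<Longrightarrow> REI s x 1 3 1 3 = (x - 1) * ((x - (- (s^6))) + x * (s^4 - 1))"
  by (simp add: REI_def RE_def RX_def dFZ_def Let_def power_int_minus field_simps; algebra?)

lemma REI_1321[simp]: "s \<noteq> 0 \<Longrightarrow> REI s x 1 3 2 1 = 0"
  by (simp add: REI_def RE_def RX_def dFZ_def Let_def power_int_minus field_simps; algebra?)

lemma REI_1322[simp]: "s \<noteq> 0 \<Longrightarrow> REI s x 1 3 2 2 = (s^4 - 1) * ((- (s^5)) * (x - 1))"
  by (simp add: REI_def RE_def RX_def dFZ_def Let_def power_int_minus field_simps; algebra?)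

lemma REI_1323[simp]: "s \<noteq> 0 \<Longrightarrow> REI s x 1 3 2 3 = 0"
  by (simp add: REI_def RE_def RX_def dFZ_def Let_def power_int_minus field_simps; algebra?)

lemma REI_1331[simp]: "s \<noteq> 0 \<Longrightarrow> REI s x 1 3 3 1 = (s^4 - 1) * ((- (s^4)) * (x - 1) - (x - (- (s^6))))"
  by (simp add: REI_def RE_def RX_def dFZ_def Let_def power_int_minus field_simps; algebra?)

lemma REI_1332[simp]: "s \<noteq> 0 \<Longrightarrow> REI s x 1 3 3 2 = 0"
  by (simp add: REI_def RE_def RX_def dFZ_def Let_def power_int_minus field_simps; algebra?)

lemma REI_1333[simp]: "s \<noteq> 0 \<Longrightarrow> REI s x 1 3 3 3 = 0"
  by (simp add: REI_def RE_def RX_def dFZ_def Let_def power_int_minus field_simps; algebra?)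

lemma REI_2111[simp]: "s \<noteq> 0 \<Longrightarrow> REI s x 2 1 1 1 = 0"
  by (simp add: REI_def RE_def RX_def dFZ_def Let_def power_int_minus field_simps; algebra?)

lemma REI_2112[simp]: "s \<noteq> 0 \<Longrightarrow> REI s x 2 1 1 2 = x * (1 - s^4) * (x - (- (s^6)))"
  by (simp add: REI_def RE_def RX_def dFZ_def Let_def power_int_minus field_simps; algebra?)

lemma REI_2113[simp]: "s \<noteq> 0 \<Longrightarrow> REI s x 2 1 1 3 = 0"
  by (simp add: REI_def RE_def RX_def dFZ_def Let_def power_int_minus field_simps; algebra?)

lemma REI_2121[simp]: "s \<noteq> 0 \<Longrightarrow> REI s x 2 1 2 1 = s^2 * (x - 1) * (x - (- (s^6)))"
  by (simp add: REI_def RE_def RX_def dFZ_def Let_def power_int_minus field_simps; algebra?)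

lemma REI_2122[simp]: "s \<noteq> 0 \<Longrightarrow> REI s x 2 1 2 2 = 0"
  by (simp add: REI_def RE_def RX_def dFZ_def Let_def power_int_minus field_simps; algebra?)

lemma REI_2123[simp]: "s \<noteq> 0 \<Longrightarrow> REI s x 2 1 2 3 = 0"
  by (simp add: REI_def RE_def RX_def dFZ_def Let_def power_int_minus field_simps; algebra?)

lemma REI_2131[simp]: "s \<noteq> 0 \<Longrightarrow> REI s x 2 1 3 1 = 0"
  by (simp add: REI_def RE_def RX_def dFZ_def Let_def power_int_minus field_simps; algebra?)

lemma REI_2132[simp]: "s \<noteq> 0 \<Longrightarrow> REI s x 2 1 3 2 = 0"
  by (simp add: REI_def RE_def RX_def dFZ_def Let_def power_int_minus field_simps; algebra?)

lemma REI_2133[simp]: "s \<noteq> 0 \<Longrightarrow> REI s x 2 1 3 3 = 0"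
  by (simp add: REI_def RE_def RX_def dFZ_def Let_def power_int_minus field_simps; algebra?)

lemma REI_2211[simp]: "s \<noteq> 0 \<Longrightarrow> REI s x 2 2 1 1 = 0"
  by (simp add: REI_def RE_def RX_def dFZ_def Let_def power_int_minus field_simps; algebra?)

lemma REI_2212[simp]: "s \<noteq> 0 \<Longrightarrow> REI s x 2 2 1 2 = 0"
  by (simp add: REI_def RE_def RX_def dFZ_def Let_def power_int_minus field_simps; algebra?)

lemma REI_2213[simp]: "s \<noteq> 0 \<Longrightarrow> REI s x 2 2 1 3 = x * (s^4 - 1) * ((x - 1) * s^1)"
  by (simp add: REI_def RE_def RX_def dFZ_def Let_def power_int_minus field_simps; algebra?)

lemma REI_2221[simp]: "s \<noteq> 0 \<Longrightarrow> REI s x 2 2 2 1 = 0"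
  by (simp add: REI_def RE_def RX_def dFZ_def Let_def power_int_minus field_simps; algebra?)

lemma REI_2222[simp]: "s \<noteq> 0 \<Longrightarrow> REI s x 2 2 2 2 = s^2 * (x - 1) * (x - (- (s^6))) + x * (s^4 - 1) * ((- (s^6)) - 1)"
  by (simp add: REI_def RE_def RX_def dFZ_def Let_def power_int_minus field_simps; algebra?)

lemma REI_2223[simp]: "s \<noteq> 0 \<Longrightarrow> REI s x 2 2 2 3 = 0"
  by (simp add: REI_def RE_def RX_def dFZ_def Let_def power_int_minus field_simps; algebra?)

lemma REI_2231[simp]: "s \<noteq> 0 \<Longrightarrow> REI s x 2 2 3 1 = (s^4 - 1) * ((- (s^5)) * (x - 1))"
  by (simp add: REI_def RE_def RX_def dFZ_def Let_def power_int_minus field_simps; algebra?)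

lemma REI_2232[simp]: "s \<noteq> 0 \<Longrightarrow> REI s x 2 2 3 2 = 0"
  by (simp add: REI_def RE_def RX_def dFZ_def Let_def power_int_minus field_simps; algebra?)

lemma REI_2233[simp]: "s \<noteq> 0 \<Longrightarrow> REI s x 2 2 3 3 = 0"
  by (simp add: REI_def RE_def RX_def dFZ_def Let_def power_int_minus field_simps; algebra?)

lemma REI_2311[simp]: "s \<noteq> 0 \<Longrightarrow> REI s x 2 3 1 1 = 0"
  by (simp add: REI_def RE_def RX_def dFZ_def Let_def power_int_minus field_simps; algebra?)

lemma REI_2312[simp]: "s \<noteq> 0 \<Longrightarrow> REI s x 2 3 1 2 = 0"
  by (simp add: REI_def RE_def RX_def dFZ_def Let_def power_int_minus field_simps; algebra?)

lemma REI_2313[simp]: "s \<noteq> 0 \<Longrightarrow> REI s x 2 3 1 3 = 0"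
  by (simp add: REI_def RE_def RX_def dFZ_def Let_def power_int_minus field_simps; algebra?)

lemma REI_2321[simp]: "s \<noteq> 0 \<Longrightarrow> REI s x 2 3 2 1 = 0"
  by (simp add: REI_def RE_def RX_def dFZ_def Let_def power_int_minus field_simps; algebra?)

lemma REI_2322[simp]: "s \<noteq> 0 \<Longrightarrow> REI s x 2 3 2 2 = 0"
  by (simp add: REI_def RE_def RX_def dFZ_def Let_def power_int_minus field_simps; algebra?)

lemma REI_2323[simp]: "s \<noteq> 0 \<Longrightarrow> REI s x 2 3 2 3 = s^2 * (x - 1) * (x - (- (s^6)))"
  by (simp add: REI_def RE_def RX_def dFZ_def Let_def power_int_minus field_simps; algebra?)

lemma REI_2331[simp]: "s \<noteq> 0 \<Longrightarrow> REI s x 2 3 3 1 = 0"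
  by (simp add: REI_def RE_def RX_def dFZ_def Let_def power_int_minus field_simps; algebra?)

lemma REI_2332[simp]: "s \<noteq> 0 \<Longrightarrow> REI s x 2 3 3 2 = (1 - s^4) * (x - (- (s^6)))"
  by (simp add: REI_def RE_def RX_def dFZ_def Let_def power_int_minus field_simps; algebra?)

lemma REI_2333[simp]: "s \<noteq> 0 \<Longrightarrow> REI s x 2 3 3 3 = 0"
  by (simp add: REI_def RE_def RX_def dFZ_def Let_def power_int_minus field_simps; algebra?)

lemma REI_3111[simp]: "s \<noteq> 0 \<Longrightarrow> REI s x 3 1 1 1 = 0"
  by (simp add: REI_def RE_def RX_def dFZ_def Let_def power_int_minus field_simps; algebra?)

lemma REI_3112[simp]: "s \<noteq> 0 \<Longrightarrow> REI s x 3 1 1 2 = 0"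
  by (simp add: REI_def RE_def RX_def dFZ_def Let_def power_int_minus field_simps; algebra?)

lemma REI_3113[simp]: "s \<noteq> 0 \<Longrightarrow> REI s x 3 1 1 3 = x * (s^4 - 1) * ((x - 1) * s^2 - (x - (- (s^6))))"
  by (simp add: REI_def RE_def RX_def dFZ_def Let_def power_int_minus field_simps; algebra?)

lemma REI_3121[simp]: "s \<noteq> 0 \<Longrightarrow> REI s x 3 1 2 1 = 0"
  by (simp add: REI_def RE_def RX_def dFZ_def Let_def power_int_minus field_simps; algebra?)

lemma REI_3122[simp]: "s \<noteq> 0 \<Longrightarrow> REI s x 3 1 2 2 = x * (s^4 - 1) * ((x - 1) * s^1)"
  by (simp add: REI_def RE_def RX_def dFZ_def Let_def power_int_minus field_simps; algebra?)

lemma REI_3123[simp]: "s \<noteq> 0 \<Longrightarrow> REI s x 3 1 2 3 = 0"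
  by (simp add: REI_def RE_def RX_def dFZ_def Let_def power_int_minus field_simps; algebra?)

lemma REI_3131[simp]: "s \<noteq> 0 \<Longrightarrow> REI s x 3 1 3 1 = (x - 1) * ((x - (- (s^6))) + x * (s^4 - 1))"
  by (simp add: REI_def RE_def RX_def dFZ_def Let_def power_int_minus field_simps; algebra?)

lemma REI_3132[simp]: "s \<noteq> 0 \<Longrightarrow> REI s x 3 1 3 2 = 0"
  by (simp add: REI_def RE_def RX_def dFZ_def Let_def power_int_minus field_simps; algebra?)

lemma REI_3133[simp]: "s \<noteq> 0 \<Longrightarrow> REI s x 3 1 3 3 = 0"
  by (simp add: REI_def RE_def RX_def dFZ_def Let_def power_int_minus field_simps; algebra?)

lemma REI_3211[simp]: "s \<noteq> 0 \<Longrightarrow> REI s x 3 2 1 1 = 0"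
  by (simp add: REI_def RE_def RX_def dFZ_def Let_def power_int_minus field_simps; algebra?)

lemma REI_3212[simp]: "s \<noteq> 0 \<Longrightarrow> REI s x 3 2 1 2 = 0"
  by (simp add: REI_def RE_def RX_def dFZ_def Let_def power_int_minus field_simps; algebra?)

lemma REI_3213[simp]: "s \<noteq> 0 \<Longrightarrow> REI s x 3 2 1 3 = 0"
  by (simp add: REI_def RE_def RX_def dFZ_def Let_def power_int_minus field_simps; algebra?)

lemma REI_3221[simp]: "s \<noteq> 0 \<Longrightarrow> REI s x 3 2 2 1 = 0"
  by (simp add: REI_def RE_def RX_def dFZ_def Let_def power_int_minus field_simps; algebra?)

lemma REI_3222[simp]: "s \<noteq> 0 \<Longrightarrow> REI s x 3 2 2 2 = 0"
  by (simp add: REI_def RE_def RX_def dFZ_def Let_def power_int_minus field_simps; algebra?)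

lemma REI_3223[simp]: "s \<noteq> 0 \<Longrightarrow> REI s x 3 2 2 3 = x * (1 - s^4) * (x - (- (s^6)))"
  by (simp add: REI_def RE_def RX_def dFZ_def Let_def power_int_minus field_simps; algebra?)

lemma REI_3231[simp]: "s \<noteq> 0 \<Longrightarrow> REI s x 3 2 3 1 = 0"
  by (simp add: REI_def RE_def RX_def dFZ_def Let_def power_int_minus field_simps; algebra?)

lemma REI_3232[simp]: "s \<noteq> 0 \<Longrightarrow> REI s x 3 2 3 2 = s^2 * (x - 1) * (x - (- (s^6)))"
  by (simp add: REI_def RE_def RX_def dFZ_def Let_def power_int_minus field_simps; algebra?)

lemma REI_3233[simp]: "s \<noteq> 0 \<Longrightarrow> REI s x 3 2 3 3 = 0"
  by (simp add: REI_def RE_def RX_def dFZ_def Let_def power_int_minus field_simps; algebra?)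

lemma REI_3311[simp]: "s \<noteq> 0 \<Longrightarrow> REI s x 3 3 1 1 = 0"
  by (simp add: REI_def RE_def RX_def dFZ_def Let_def power_int_minus field_simps; algebra?)

lemma REI_3312[simp]: "s \<noteq> 0 \<Longrightarrow> REI s x 3 3 1 2 = 0"
  by (simp add: REI_def RE_def RX_def dFZ_def Let_def power_int_minus field_simps; algebra?)

lemma REI_3313[simp]: "s \<noteq> 0 \<Longrightarrow> REI s x 3 3 1 3 = 0"
  by (simp add: REI_def RE_def RX_def dFZ_def Let_def power_int_minus field_simps; algebra?)

lemma REI_3321[simp]: "s \<noteq> 0 \<Longrightarrow> REI s x 3 3 2 1 = 0"
  by (simp add: REI_def RE_def RX_def dFZ_def Let_def power_int_minus field_simps; algebra?)

lemma REI_3322[simp]: "s \<noteq> 0 \<Longrightarrow> REI s x 3 3 2 2 = 0"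
  by (simp add: REI_def RE_def RX_def dFZ_def Let_def power_int_minus field_simps; algebra?)

lemma REI_3323[simp]: "s \<noteq> 0 \<Longrightarrow> REI s x 3 3 2 3 = 0"
  by (simp add: REI_def RE_def RX_def dFZ_def Let_def power_int_minus field_simps; algebra?)

lemma REI_3331[simp]: "s \<noteq> 0 \<Longrightarrow> REI s x 3 3 3 1 = 0"
  by (simp add: REI_def RE_def RX_def dFZ_def Let_def power_int_minus field_simps; algebra?)

lemma REI_3332[simp]: "s \<noteq> 0 \<Longrightarrow> REI s x 3 3 3 2 = 0"
  by (simp add: REI_def RE_def RX_def dFZ_def Let_def power_int_minus field_simps; algebra?)

lemma REI_3333[simp]: "s \<noteq> 0 \<Longrightarrow> REI s x 3 3 3 3 = (x - (- (s^6))) * (x - s^4)"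
  by (simp add: REI_def RE_def RX_def dFZ_def Let_def power_int_minus field_simps; algebra?)


lemmas REF_simps = REF_1111 REF_1112 REF_1113 REF_1121 REF_1122 REF_1123 REF_1131 REF_1132 REF_1133 REF_1211 REF_1212 REF_1213 REF_1221 REF_1222 REF_1223 REF_1231 REF_1232 REF_1233 REF_1311 REF_1312 REF_1313 REF_1321 REF_1322 REF_1323 REF_1331 REF_1332 REF_1333 REF_2111 REF_2112 REF_2113 REF_2121 REF_2122 REF_2123 REF_2131 REF_2132 REF_2133 REF_2211 REF_2212 REF_2213 REF_2221 REF_2222 REF_2223 REF_2231 REF_2232 REF_2233 REF_2311 REF_2312 REF_2313 REF_2321 REF_2322 REF_2323 REF_2331 REF_2332 REF_2333 REF_3111 REF_3112 REF_3113 REF_3121 REF_3122 REF_3123 REF_3131 REF_3132 REF_3133 REF_3211 REF_3212 REF_3213 REF_3221 REF_3222 REF_3223 REF_3231 REF_3232 REF_3233 REF_3311 REF_3312 REF_3313 REF_3321 REF_3322 REF_3323 REF_3331 REF_3332 REF_3333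
lemmas REI_simps = REI_1111 REI_1112 REI_1113 REI_1121 REI_1122 REI_1123 REI_1131 REI_1132 REI_1133 REI_1211 REI_1212 REI_1213 REI_1221 REI_1222 REI_1223 REI_1231 REI_1232 REI_1233 REI_1311 REI_1312 REI_1313 REI_1321 REI_1322 REI_1323 REI_1331 REI_1332 REI_1333 REI_2111 REI_2112 REI_2113 REI_2121 REI_2122 REI_2123 REI_2131 REI_2132 REI_2133 REI_2211 REI_2212 REI_2213 REI_2221 REI_2222 REI_2223 REI_2231 REI_2232 REI_2233 REI_2311 REI_2312 REI_2313 REI_2321 REI_2322 REI_2323 REI_2331 REI_2332 REI_2333 REI_3111 REI_3112 REI_3113 REI_3121 REI_3122 REI_3123 REI_3131 REI_3132 REI_3133 REI_3211 REI_3212 REI_3213 REI_3221 REI_3222 REI_3223 REI_3231 REI_3232 REI_3233 REI_3311 REI_3312 REI_3313 REI_3321 REI_3322 REI_3323 REI_3331 REI_3332 REI_3333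
lemma sum3: "(\<Sum>k\<in>{1::nat,2,3}. f k) = f 1 + f 2 + f 3" by (simp add: add.assoc)
lemma ybeF_all:
  assumes "s \<noteq> 0"
  shows "\<forall>a\<in>{1::nat,2,3}. \<forall>a2\<in>{1::nat,2,3}. \<forall>i\<in>{1::nat,2,3}. \<forall>j\<in>{1::nat,2,3}. \<forall>g\<in>{1::nat,2,3}. \<forall>g2\<in>{1::nat,2,3}.
    (\<Sum>c\<in>{1::nat,2,3}. \<Sum>c2\<in>{1::nat,2,3}. REF s X a a2 c c2 * (\<Sum>k\<in>{1::nat,2,3}. REF s (X*Y) c i g k * REF s Y c2 k g2 j)) =
    (\<Sum>c\<in>{1::nat,2,3}. \<Sum>c2\<in>{1::nat,2,3}. (\<Sum>k\<in>{1::nat,2,3}. REF s Y a2 i c2 k * REF s (X*Y) a k c j) * REF s X c c2 g g2)"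
  apply (simp only: ball_simps(7) ball_empty simp_thms)
  apply (intro conjI; insert assms(1); simp only: sum3 REF_simps mult_zero_left mult_zero_right add_0_left add_0_right not_False_eq_True; algebra?)
  done

lemma ybeI_all:
  assumes "s \<noteq> 0"
  shows "\<forall>a\<in>{1::nat,2,3}. \<forall>a2\<in>{1::nat,2,3}. \<forall>i\<in>{1::nat,2,3}. \<forall>j\<in>{1::nat,2,3}. \<forall>g\<in>{1::nat,2,3}. \<forall>g2\<in>{1::nat,2,3}.
    (\<Sum>c\<in>{1::nat,2,3}. \<Sum>c2\<in>{1::nat,2,3}. REI s X a a2 c c2 * (\<Sum>k\<in>{1::nat,2,3}. REI s (X*Y) c i g k * REI s Y c2 k g2 j)) =
    (\<Sum>c\<in>{1::nat,2,3}. \<Sum>c2\<in>{1::nat,2,3}. (\<Sum>k\<in>{1::nat,2,3}. REI s Y a2 i c2 k * REI s (X*Y) a k c j) * REI s X c c2 g g2)"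
  apply (simp only: ball_simps(7) ball_empty simp_thms)
  apply (intro conjI; insert assms(1); simp only: sum3 REI_simps mult_zero_left mult_zero_right add_0_left add_0_right not_False_eq_True; algebra?)
  done

definition dP :: "complex \<Rightarrow> complex \<Rightarrow> complex \<Rightarrow> complex \<Rightarrow> nat \<Rightarrow> nat \<Rightarrow> complex poly" where
  "dP q s z w \<alpha> \<beta> =
    (if \<alpha> = 2 \<and> \<beta> = 2 then [: q*z, (- q*(1+z) + (q^2-1)*(z-1))*w, q*w^2 :]
     else if \<alpha> = \<beta> then [: z, - (z + q^2)*w, q^2*w^2 :]
     else if \<alpha> < \<beta> then [: (q^2 - 1) * (- (z * s powi (int \<alpha> - int \<beta>)) + (if \<alpha> = 4 - \<beta> then 1 else 0) * z),
                            (q^2 - 1) * (z * s powi (int \<alpha> - int \<beta>) - (if \<alpha> = 4 - \<beta> then 1 else 0)) * w, 0 :]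
     else [: 0, (q^2 - 1) * (- (s powi (int \<alpha> - int \<beta>)) + (if \<alpha> = 4 - \<beta> then 1 else 0) * z) * w,
             (q^2 - 1) * (s powi (int \<alpha> - int \<beta>) - (if \<alpha> = 4 - \<beta> then 1 else 0)) * w^2 :])"

definition RP :: "complex \<Rightarrow> complex \<Rightarrow> complex \<Rightarrow> complex \<Rightarrow> nat \<Rightarrow> nat \<Rightarrow> complex poly" where
  "RP q s z w r c =
    (let a = [: z*q^2, -(z+q^2)*w, w^2 :];
         b = [: q*z, -q*(1+z)*w, q*w^2 :];
         cc = [: -(1-q^2)*z, (1-q^2)*w, 0 :];
         cb = [: 0, -(1-q^2)*z*w, (1-q^2)*w^2 :];
         d = dP q s z w
     in if (r, c) = (1, 1) then a
        else if (r, c) = (2, 2) then b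
        else if (r, c) = (2, 4) then cc
        else if (r, c) = (3, 3) then d 1 1
        else if (r, c) = (3, 5) then d 1 2
        else if (r, c) = (3, 7) then d 1 3
        else if (r, c) = (4, 2) then cb
        else if (r, c) = (4, 4) then b
        else if (r, c) = (5, 3) then d 2 1
        else if (r, c) = (5, 5) then d 2 2
        else if (r, c) = (5, 7) then d 2 3
        else if (r, c) = (6, 6) then b
        else if (r, c) = (6, 8) then cc
        else if (r, c) = (7, 3) then d 3 1
        else if (r, c) = (7, 5) then d 3 2
        else if (r, c) = (7, 7) then d 3 3
        else if (r, c) = (8, 6) then cb
        else if (r, c) = (8, 8) then b
        else if (r, c) = (9, 9) then a
        else 0)"

lemma pa: "poly [: z*q^2, -(z+q^2)*w, w^2 :] (X::complex) = (w*X - z) * (w*X - q^2)" by (simp; algebra)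
lemma pb: "poly [: q*z, -q*(1+z)*w, q*w^2 :] (X::complex) = q * (w*X - 1) * (w*X - z)" by (simp; algebra)
lemma pcc: "poly [: -(1-q^2)*z, (1-q^2)*w, 0 :] (X::complex) = (1 - q^2) * (w*X - z)" by (simp; algebra)
lemma pcb: "poly [: 0, -(1-q^2)*z*w, (1-q^2)*w^2 :] (X::complex) = (w*X) * (1 - q^2) * (w*X - z)" by (simp; algebra)
lemma d22: "poly [: q*z, (- q*(1+z) + (q^2-1)*(z-1))*w, q*w^2 :] (X::complex) = q * (w*X - 1) * (w*X - z) + (w*X) * (q^2 - 1) * (z - 1)"
  by (simp; algebra)
lemma deq: "poly [: z, - (z + q^2)*w, q^2*w^2 :] (X::complex) = (w*X - 1) * ((w*X - z) + (w*X) * (q^2 - 1))"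
  by (simp; algebra)
lemma dlt: "poly [: (q^2 - 1) * (- (z * S) + D * z), (q^2 - 1) * (z * S - D) * w, 0 :] (X::complex)
   = (q^2 - 1) * (z * (w*X - 1) * S - D * (w*X - z))"
  by (simp; algebra)
lemma dgt: "poly [: 0, (q^2 - 1) * (- S + D * z) * w, (q^2 - 1) * (S - D) * w^2 :] (X::complex)
   = (w*X) * (q^2 - 1) * ((w*X - 1) * S - D * (w*X - z))"
  by (simp; algebra)

lemma poly_dP: "poly (dP q s z w \<alpha> \<beta>) X = dFZ q s z (w*X) \<alpha> \<beta>"
  unfolding dP_def dFZ_def by (simp only: if_distrib[of "\<lambda>p. poly p X"] d22 deq dlt dgt)

lemma poly_RP: "poly (RP q s z w r c) X = RX q s z (w*X) r c"
  unfolding RP_def RX_def Let_def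
  by (simp only: if_distrib[of "\<lambda>p. poly p X"] poly_dP pa pb pcc pcb poly_0)


lemma deg3: "degree [:a,b,c:] \<le> 2"
proof -
  have "degree [:b,c:] \<le> 1" using degree_pCons_le[of b "[:c:]"] by simp
  then show ?thesis using degree_pCons_le[of a "[:b,c:]"] by simp
qed
lemma deg_if: "degree a \<le> n \<Longrightarrow> degree b \<le> n \<Longrightarrow> degree (if P then a else b) \<le> n" by auto
lemma deg_dP: "degree (dP q s z w \<alpha> \<beta>) \<le> 2"
  unfolding dP_def by (intro deg_if deg3)
lemma deg_RP: "degree (RP q s z w r c) \<le> 2"
  unfolding RP_def Let_def by (intro deg_if deg3 deg_dP degree_0[THEN eq_refl, THEN order_trans] ; simp)

definition RPe where "RPe q s z w \<alpha> i \<beta> j = RP q s z w (3 * (\<alpha> - 1) + i) (3 * (\<beta> - 1) + j)"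

lemma deg2: "degree [:a,b,0:] \<le> 1"
  using degree_pCons_le[of a "[:b:]"] by simp
lemma deg_RPe_upper_all:
  "\<forall>\<alpha>\<in>{1::nat,2,3}. \<forall>\<beta>\<in>{1::nat,2,3}. \<forall>i\<in>{1::nat,2,3}. \<forall>j\<in>{1::nat,2,3}. \<alpha> < \<beta> \<longrightarrow> degree (RPe q s z w \<alpha> i \<beta> j) \<le> 1"
  apply (simp only: ball_simps(7) ball_empty simp_thms)
  apply (intro conjI; simp add: RPe_def RP_def Let_def dP_def deg2)
  done
lemma deg_RPe_upper:
  assumes "\<alpha> < \<beta>" "\<alpha> \<in> {1,2,3}" "\<beta> \<in> {1,2,3}" "i \<in> {1,2,3}" "j \<in> {1,2,3}"
  shows "degree (RPe q s z w \<alpha> i \<beta> j) \<le> 1"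
  using deg_RPe_upper_all assms by blast

fun TPoly :: "complex \<Rightarrow> complex \<Rightarrow> complex \<Rightarrow> complex list \<Rightarrow> nat \<Rightarrow> nat \<Rightarrow> nat list \<Rightarrow> nat list \<Rightarrow> complex poly" where
  "TPoly q s z [] \<alpha> \<beta> [] [] = (if \<alpha> = \<beta> then 1 else 0)"
| "TPoly q s z (mu # ms) \<alpha> \<beta> (i # xs) (j # ys) =
     (\<Sum>\<gamma>\<in>{1,2,3}. RPe q s z (exp (-2*mu)) \<alpha> i \<gamma> j * TPoly q s z ms \<gamma> \<beta> xs ys)"
| "TPoly q s z _ \<alpha> \<beta> _ _ = 0"

lemma exp_diff2: "exp (2 * ((lam::complex) - mu)) = exp (-2*mu) * exp (2*lam)"
  unfolding mult_exp_exp by (rule arg_cong[where f=exp]) (simp add: algebra_simps)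

lemma Rent_RE: "Rent q s z lam \<alpha> i \<beta> j = RE q s z (exp (2*lam)) \<alpha> i \<beta> j"
  by (simp add: Rent_def RE_def Rmat_RX)

lemma Rent_poly: "Rent q s z (lam - mu) \<alpha> i \<beta> j = poly (RPe q s z (exp (-2*mu)) \<alpha> i \<beta> j) (exp (2*lam))"
  by (simp only: Rent_RE RE_def RPe_def poly_RP exp_diff2)

lemma Tmono_poly: "Tmono q s z lam mus \<alpha> \<beta> xs ys = poly (TPoly q s z mus \<alpha> \<beta> xs ys) (exp (2*lam))"
  by (induction q s z lam mus \<alpha> \<beta> xs ys rule: Tmono.induct) (simp_all add: poly_sum Rent_poly)

definition G :: "complex poly \<Rightarrow> nat \<Rightarrow> bool" where "G p m = (p = 0 \<or> degree p < m)"

lemma G_mult: "G p m1 \<Longrightarrow> G r m2 \<Longrightarrow> G (p*r) (m1+m2-1)"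
  unfolding G_def
  by (cases "p = 0 \<or> r = 0") (auto simp: degree_mult_eq)

lemma G_add: "G p m \<Longrightarrow> G r m \<Longrightarrow> G (p+r) m"
  unfolding G_def using degree_add_le_max[of p r] by auto

lemma G_sum: "finite A \<Longrightarrow> (\<And>x. x \<in> A \<Longrightarrow> G (f x) m) \<Longrightarrow> G (sum f A) m"
  by (induction A rule: finite_induct) (auto simp: G_def[of 0] intro: G_add)

lemma G_mono: "G p m \<Longrightarrow> m \<le> m' \<Longrightarrow> G p m'"
  unfolding G_def by auto

lemma G_RPe: "\<alpha> \<in> {1,2,3} \<Longrightarrow> \<beta> \<in> {1,2,3} \<Longrightarrow> i \<in> {1,2,3} \<Longrightarrow> j \<in> {1,2,3} \<Longrightarrow>
   G (RPe q s z w \<alpha> i \<beta> j) (if \<alpha> < \<beta> then 2 else 3)"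
proof (cases "\<alpha> < \<beta>")
  case True
  assume a: "\<alpha> \<in> {1,2,3}" "\<beta> \<in> {1,2,3}" "i \<in> {1,2,3}" "j \<in> {1,2,3}"
  have "degree (RPe q s z w \<alpha> i \<beta> j) \<le> 1" using deg_RPe_upper True a by blast
  then show ?thesis using True unfolding G_def by simp
next
  case False
  have "degree (RPe q s z w \<alpha> i \<beta> j) \<le> 2" unfolding RPe_def by (rule deg_RP)
  then show ?thesis using False unfolding G_def by simp
qed

lemma arith_aux: "(if (a::nat) < c then 2 else 3) + (2*n + (if c < b then 0 else 1)) - 1 \<le> 2 * Suc n + (if a < b then 0 else 1)"
  by auto

lemma TPoly_G:
  assumes "length xs = length mus" "length ys = length mus" "set xs \<subseteq> {1,2,3}" "set ys \<subseteq> {1,2,3}"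
    "\<alpha> \<in> {1,2,3}" "\<beta> \<in> {1,2,3}"
  shows "G (TPoly q s z mus \<alpha> \<beta> xs ys) (2 * length mus + (if \<alpha> < \<beta> then 0 else 1))"
  using assms
proof (induction mus arbitrary: \<alpha> xs ys)
  case Nil
  then show ?case by (auto simp: G_def)
next
  case (Cons mu ms)
  obtain i xs1 where i: "xs = i # xs1" using Cons.prems(1) by (cases xs) auto
  obtain j ys1 where j: "ys = j # ys1" using Cons.prems(2) by (cases ys) auto
  have ij: "i \<in> {1,2,3}" "j \<in> {1,2,3}" "set xs1 \<subseteq> {1,2,3}" "set ys1 \<subseteq> {1,2,3}"
    using Cons.prems(3,4) i j by auto
  show ?case unfolding i j TPoly.simps
  proof (rule G_sum)
    fix \<gamma> :: nat assume g: "\<gamma> \<in> {1,2,3}"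
    have IH: "G (TPoly q s z ms \<gamma> \<beta> xs1 ys1) (2 * length ms + (if \<gamma> < \<beta> then 0 else 1))"
      using Cons.IH[of xs1 ys1 \<gamma>] Cons.prems(1,2,6) i j ij(3,4) g by simp
    have R: "G (RPe q s z (exp (-2*mu)) \<alpha> i \<gamma> j) (if \<alpha> < \<gamma> then 2 else 3)"
      using G_RPe[of \<alpha> \<gamma> i j] Cons.prems(5) ij(1,2) g by simp
    show "G (RPe q s z (exp (-2*mu)) \<alpha> i \<gamma> j * TPoly q s z ms \<gamma> \<beta> xs1 ys1)
          (2 * length (mu # ms) + (if \<alpha> < \<beta> then 0 else 1))"
      by (rule G_mono[OF G_mult[OF R IH]]) (simp only: arith_aux length_Cons)
  qed simp
qed

lemma poly_extend:
  fixes p :: "complex poly"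
  assumes "degree p \<le> D"
  shows "poly p x = (\<Sum>k\<le>D. coeff p k * x^k)"
proof -
  have "poly p x = (\<Sum>k\<le>degree p. coeff p k * x^k)" by (rule poly_altdef)
  also have "\<dots> = (\<Sum>k\<le>D. coeff p k * x^k)"
    by (rule sum.mono_neutral_left) (use assms in \<open>auto simp: coeff_eq_0\<close>)
  finally show ?thesis .
qed

lemma states_finite: "finite (states n)"
  unfolding states_def using finite_lists_length_eq[of "{1,2,3::nat}" n] by (simp add: conj_commute)

lemma E_coef:
  assumes "length mus = L" "L \<ge> 1" "xs \<in> states L" "ys \<in> states L"
  shows "Tmono q s z lam mus 1 3 xs ys = (\<Sum>k\<le>2*L-1. coeff (TPoly q s z mus 1 3 xs ys) k * exp (2*lam)^k)"
proof -
  have "G (TPoly q s z mus 1 3 xs ys) (2 * length mus + (if (1::nat) < 3 then 0 else 1))"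
    by (rule TPoly_G) (use assms in \<open>auto simp: states_def\<close>)
  then have "degree (TPoly q s z mus 1 3 xs ys) \<le> 2*L-1"
    using assms(1,2) unfolding G_def by auto
  then show ?thesis unfolding Tmono_poly by (rule poly_extend)
qed

lemma PiE_Suc_reindex:
  "(\<Sum>e'\<in>PiE {..<Suc m} (\<lambda>_. B). f e') = (\<Sum>(k,e)\<in>B \<times> PiE {..<m} (\<lambda>_. B). f (e(m:=k)))"
proof -
  have eq: "PiE {..<Suc m} (\<lambda>_. B) = (\<lambda>(y,g). g(m:=y)) ` (B \<times> PiE {..<m} (\<lambda>_. B))"
    using PiE_insert_eq[of m "{..<m}" "\<lambda>_. B"] by (simp add: lessThan_Suc)
  have inj: "inj_on (\<lambda>(y,g). g(m:=y)) (B \<times> PiE {..<m} (\<lambda>_. B))"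
    using inj_combinator[of m "{..<m}" "\<lambda>_. B"] by simp
  show ?thesis unfolding eq sum.reindex[OF inj] by (simp add: comp_def case_prod_unfold)
qed

definition Fold where "Fold q s z mus lams v = foldl (\<lambda>v lam. applyE q s z mus lam v) v lams"

lemma Fold_snoc: "Fold q s z mus (ls @ [l]) v = applyE q s z mus l (Fold q s z mus ls v)"
  by (simp add: Fold_def)

lemma V_rep:
  assumes "length mus = L" "L \<ge> 1"
  shows "\<exists>c. \<forall>lams. length lams = m \<longrightarrow> (\<forall>xs\<in>states L. Fold q s z mus lams v0 xs =
           (\<Sum>e\<in>PiE {..<m} (\<lambda>_. {..2*L-1}). c xs e * (\<Prod>i<m. exp (2 * lams ! i) ^ e i)))"
proof (induction m)
  case 0
  show ?case
    by (rule exI[of _ "\<lambda>xs e. v0 xs"]) (simp add: Fold_def)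
next
  case (Suc m)
  then obtain c where c: "\<And>lams xs. length lams = m \<Longrightarrow> xs \<in> states L \<Longrightarrow> Fold q s z mus lams v0 xs =
           (\<Sum>e\<in>PiE {..<m} (\<lambda>_. {..2*L-1}). c xs e * (\<Prod>i<m. exp (2 * lams ! i) ^ e i))"
    by blast
  define D where "D = 2*L-1"
  define P where "P = PiE {..<m} (\<lambda>_::nat. {..D})"
  define a where "a xs ys k = coeff (TPoly q s z mus 1 3 xs ys) k" for xs ys k
  define c' where "c' xs e = (\<Sum>ys\<in>states L. a xs ys (e m) * c ys (restrict e {..<m}))" for xs e
  show ?case
  proof (rule exI[of _ c'], intro allI impI ballI)
    fix lams :: "complex list" and xs assume len: "length lams = Suc m" and xs: "xs \<in> states L"
    obtain ls l where lams: "lams = ls @ [l]" using len by (cases lams rule: rev_cases) auto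
    have lls: "length ls = m" using len lams by simp
    define X where "X = exp (2*l)"
    define Pr where "Pr e = (\<Prod>i<m. exp (2 * ls ! i) ^ e i)" for e :: "nat \<Rightarrow> nat"
    have "Fold q s z mus lams v0 xs = (\<Sum>ys\<in>states L. Tmono q s z l mus 1 3 xs ys * Fold q s z mus ls v0 ys)"
      unfolding lams Fold_snoc applyE_def using assms(1) by simp
    also have "\<dots> = (\<Sum>ys\<in>states L. (\<Sum>k\<le>D. a xs ys k * X^k) * (\<Sum>e\<in>P. c ys e * Pr e))"
    proof (rule sum.cong[OF refl])
      fix ys assume ys: "ys \<in> states L"
      show "Tmono q s z l mus 1 3 xs ys * Fold q s z mus ls v0 ys = (\<Sum>k\<le>D. a xs ys k * X^k) * (\<Sum>e\<in>P. c ys e * Pr e)"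
        using E_coef[OF assms xs ys, of q s z l] c[OF lls ys] by (simp add: a_def X_def D_def P_def Pr_def)
    qed
    also have "\<dots> = (\<Sum>ys\<in>states L. \<Sum>k\<le>D. \<Sum>e\<in>P. a xs ys k * c ys e * (X^k * Pr e))"
      by (simp add: sum_distrib_left sum_distrib_right mult_ac)
    also have "\<dots> = (\<Sum>k\<le>D. \<Sum>e\<in>P. \<Sum>ys\<in>states L. a xs ys k * c ys e * (X^k * Pr e))"
      by (subst sum.swap) (simp add: sum.swap[of _ "states L"])
    also have "\<dots> = (\<Sum>(k,e)\<in>{..D} \<times> P. c' xs (e(m:=k)) * (X^k * Pr e))"
    proof -
      have "\<And>k e. e \<in> P \<Longrightarrow> restrict (e(m:=k)) {..<m} = e"
        unfolding P_def by (auto simp: restrict_def PiE_def extensional_def fun_eq_iff)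
      then have "\<And>k e. e \<in> P \<Longrightarrow> c' xs (e(m:=k)) = (\<Sum>ys\<in>states L. a xs ys k * c ys e)"
        unfolding c'_def by simp
      then show ?thesis
        by (simp add: sum.cartesian_product[symmetric] sum_distrib_right)
    qed
    also have "\<dots> = (\<Sum>e'\<in>PiE {..<Suc m} (\<lambda>_. {..D}). c' xs e' * (\<Prod>i<Suc m. exp (2 * lams ! i) ^ e' i))"
    proof -
      have A: "(\<Prod>i<m. exp (2 * lams ! i) ^ (e(m:=k)) i) = Pr e" for k e
        unfolding Pr_def by (rule prod.cong) (auto simp: lams nth_append lls)
      have B: "lams ! m = l" using lls lams by (simp add: nth_append)
      have "\<And>k e. (\<Prod>i<Suc m. exp (2 * lams ! i) ^ (e(m:=k)) i) = X^k * Pr e"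
        by (simp only: prod.lessThan_Suc A fun_upd_same B X_def) (rule mult.commute)
      then show ?thesis unfolding PiE_Suc_reindex P_def by simp
    qed
    finally show "Fold q s z mus lams v0 xs =
        (\<Sum>e\<in>PiE {..<Suc m} (\<lambda>_. {..2*L-1}). c' xs e * (\<Prod>i<Suc m. exp (2 * lams ! i) ^ e i))"
      unfolding D_def .
  qed
qed

lemma states_Suc: "states (Suc n) = (\<lambda>(k,ks). k # ks) ` ({1,2,3} \<times> states n)"
  unfolding states_def by (auto simp: length_Suc_conv image_iff)


lemma sum_states_Suc: "(\<Sum>x\<in>states (Suc n). f x) = (\<Sum>k\<in>{1,2,3}. \<Sum>ks\<in>states n. f (k # ks))"
proof -
  have inj: "inj_on (\<lambda>(k,ks). k # ks) ({1,2,3::nat} \<times> states n)" by (auto simp: inj_on_def)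
  show ?thesis unfolding states_Suc sum.reindex[OF inj]
    by (simp add: sum.cartesian_product case_prod_unfold)
qed

lemma swap4: "(\<Sum>a\<in>A. \<Sum>b\<in>B. \<Sum>c\<in>C. \<Sum>d\<in>D. f a b c d) = (\<Sum>c\<in>C. \<Sum>d\<in>D. \<Sum>a\<in>A. \<Sum>b\<in>B. f a b c d)"
proof -
  have "(\<Sum>a\<in>A. \<Sum>b\<in>B. \<Sum>c\<in>C. \<Sum>d\<in>D. f a b c d) = (\<Sum>a\<in>A. \<Sum>c\<in>C. \<Sum>b\<in>B. \<Sum>d\<in>D. f a b c d)"
    by (rule sum.cong[OF refl], rule sum.swap)
  also have "\<dots> = (\<Sum>a\<in>A. \<Sum>c\<in>C. \<Sum>d\<in>D. \<Sum>b\<in>B. f a b c d)"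
    by (rule sum.cong[OF refl], rule sum.cong[OF refl], rule sum.swap)
  also have "\<dots> = (\<Sum>c\<in>C. \<Sum>a\<in>A. \<Sum>d\<in>D. \<Sum>b\<in>B. f a b c d)"
    by (rule sum.swap)
  also have "\<dots> = (\<Sum>c\<in>C. \<Sum>d\<in>D. \<Sum>a\<in>A. \<Sum>b\<in>B. f a b c d)"
    by (rule sum.cong[OF refl], rule sum.swap)
  finally show ?thesis .
qed

lemma rearrX:
  fixes A :: "'i \<Rightarrow> 'i \<Rightarrow> 'a::comm_semiring_1"
  shows "(\<Sum>c\<in>I. \<Sum>c2\<in>I. A c c2 * (\<Sum>g\<in>I. \<Sum>g2\<in>I. B c c2 g g2 * C g g2)) =
         (\<Sum>g\<in>I. \<Sum>g2\<in>I. (\<Sum>c\<in>I. \<Sum>c2\<in>I. A c c2 * B c c2 g g2) * C g g2)"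
proof -
  have "(\<Sum>c\<in>I. \<Sum>c2\<in>I. A c c2 * (\<Sum>g\<in>I. \<Sum>g2\<in>I. B c c2 g g2 * C g g2)) =
        (\<Sum>c\<in>I. \<Sum>c2\<in>I. \<Sum>g\<in>I. \<Sum>g2\<in>I. A c c2 * B c c2 g g2 * C g g2)"
    by (simp add: sum_distrib_left mult.assoc)
  also have "\<dots> = (\<Sum>g\<in>I. \<Sum>g2\<in>I. \<Sum>c\<in>I. \<Sum>c2\<in>I. A c c2 * B c c2 g g2 * C g g2)"
    by (rule swap4)
  also have "\<dots> = (\<Sum>g\<in>I. \<Sum>g2\<in>I. (\<Sum>c\<in>I. \<Sum>c2\<in>I. A c c2 * B c c2 g g2) * C g g2)"
    by (simp add: sum_distrib_right)
  finally show ?thesis .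
qed

lemma rearr_cons:
  fixes A :: "'k \<Rightarrow> 'g \<Rightarrow> 'a::comm_semiring_1"
  shows "(\<Sum>k\<in>K. \<Sum>ks\<in>S. (\<Sum>g\<in>Gs. A k g * B g ks) * (\<Sum>g2\<in>Gs. C k g2 * D g2 ks)) =
         (\<Sum>g\<in>Gs. \<Sum>g2\<in>Gs. (\<Sum>k\<in>K. A k g * C k g2) * (\<Sum>ks\<in>S. B g ks * D g2 ks))"
proof -
  have "(\<Sum>k\<in>K. \<Sum>ks\<in>S. (\<Sum>g\<in>Gs. A k g * B g ks) * (\<Sum>g2\<in>Gs. C k g2 * D g2 ks)) =
        (\<Sum>k\<in>K. \<Sum>ks\<in>S. \<Sum>g\<in>Gs. \<Sum>g2\<in>Gs. (A k g * C k g2) * (B g ks * D g2 ks))"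
    by (simp add: sum_product mult_ac)
  also have "\<dots> = (\<Sum>g\<in>Gs. \<Sum>g2\<in>Gs. \<Sum>k\<in>K. \<Sum>ks\<in>S. (A k g * C k g2) * (B g ks * D g2 ks))"
    by (rule swap4)
  also have "\<dots> = (\<Sum>g\<in>Gs. \<Sum>g2\<in>Gs. (\<Sum>k\<in>K. A k g * C k g2) * (\<Sum>ks\<in>S. B g ks * D g2 ks))"
    by (simp add: sum_product)
  finally show ?thesis .
qed

definition MM where
  "MM q s z mus lam mu a a2 b b2 xs ys =
     (\<Sum>ks\<in>states (length mus). Tmono q s z lam mus a b xs ks * Tmono q s z mu mus a2 b2 ks ys)"

definition WW where
  "WW q s z lam mu nu a a2 i j g g2 = (\<Sum>k\<in>{1,2,3}. Rent q s z (lam - nu) a i g k * Rent q s z (mu - nu) a2 k g2 j)"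

lemma MM_cons:
  "MM q s z (nu # ms) lam mu a a2 b b2 (i # xs) (j # ys) =
   (\<Sum>g\<in>{1,2,3}. \<Sum>g2\<in>{1,2,3}. WW q s z lam mu nu a a2 i j g g2 * MM q s z ms lam mu g g2 b b2 xs ys)"
  unfolding MM_def WW_def length_Cons sum_states_Suc Tmono.simps
  by (rule rearr_cons)

lemma MM_cons':
  "MM q s z (nu # ms) mu lam a2 a b2 b (i # xs) (j # ys) =
   (\<Sum>g\<in>{1,2,3}. \<Sum>g2\<in>{1,2,3}. WW q s z mu lam nu a2 a i j g2 g * MM q s z ms mu lam g2 g b2 b xs ys)"
  unfolding MM_def WW_def length_Cons sum_states_Suc Tmono.simps
  by (subst rearr_cons) (rule sum.swap)


lemma RE_model:
  assumes "q = s^2" "z = q \<or> z = - (q^3)"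
  shows "(RE q s z = REF s) \<or> (RE q s z = REI s)"
proof (cases "z = q")
  case True
  then show ?thesis using assms by (auto simp: fun_eq_iff REF_def)
next
  case False
  then have "z = - (s^6)" using assms by (simp add: power_mult[symmetric])
  then show ?thesis using assms by (auto simp: fun_eq_iff REI_def)
qed

lemma ybe_gen:
  assumes "s \<noteq> 0" "q = s^2" "z = q \<or> z = - (q^3)"
    "a \<in> {1,2,3}" "a2 \<in> {1,2,3}" "i \<in> {1,2,3}" "j \<in> {1,2,3}" "g \<in> {1,2,3}" "g2 \<in> {1,2,3}"
  shows "(\<Sum>c\<in>{1::nat,2,3}. \<Sum>c2\<in>{1::nat,2,3}. RE q s z X a a2 c c2 * (\<Sum>k\<in>{1::nat,2,3}. RE q s z (X*Y) c i g k * RE q s z Y c2 k g2 j)) =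
    (\<Sum>c\<in>{1::nat,2,3}. \<Sum>c2\<in>{1::nat,2,3}. (\<Sum>k\<in>{1::nat,2,3}. RE q s z Y a2 i c2 k * RE q s z (X*Y) a k c j) * RE q s z X c c2 g g2)"
  using RE_model[OF assms(2,3)]
proof
  assume e: "RE q s z = REF s"
  show ?thesis unfolding e using ybeF_all[OF assms(1), of X Y] assms(4-9) by blast
next
  assume e: "RE q s z = REI s"
  show ?thesis unfolding e using ybeI_all[OF assms(1), of X Y] assms(4-9) by blast
qed

lemma exp_split: "exp (2 * ((lam::complex) - nu)) = exp (2 * (lam - mu)) * exp (2 * (mu - nu))"
  unfolding mult_exp_exp by (rule arg_cong[where f=exp]) (simp add: algebra_simps)

lemma ybeR:
  assumes "s \<noteq> 0" "q = s^2" "z = q \<or> z = - (q^3)"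
    "a \<in> {1,2,3}" "a2 \<in> {1,2,3}" "i \<in> {1,2,3}" "j \<in> {1,2,3}" "g \<in> {1,2,3}" "g2 \<in> {1,2,3}"
  shows "(\<Sum>c\<in>{1,2,3}. \<Sum>c2\<in>{1,2,3}. Rent q s z (lam - mu) a a2 c c2 * WW q s z lam mu nu c c2 i j g g2) =
         (\<Sum>c\<in>{1,2,3}. \<Sum>c2\<in>{1,2,3}. WW q s z mu lam nu a2 a i j c2 c * Rent q s z (lam - mu) c c2 g g2)"
  using ybe_gen[OF assms, of "exp (2 * (lam - mu))" "exp (2 * (mu - nu))"]
  unfolding WW_def Rent_RE exp_split[of lam nu mu] .

lemma states_0: "states 0 = {[]}" by (auto simp: states_def)

lemma MM_Nil: "MM q s z [] lam mu a a2 b b2 [] [] = (if a = b \<and> a2 = b2 then 1 else 0)"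
  unfolding MM_def by (simp add: states_0)

lemma delta2:
  assumes "b \<in> {1,2,3}" "b2 \<in> {1,2,3}"
  shows "(\<Sum>c\<in>{1::nat,2,3}. \<Sum>c2\<in>{1::nat,2,3}. (f c c2::complex) * (if c = b \<and> c2 = b2 then 1 else 0)) = f b b2"
        "(\<Sum>c\<in>{1::nat,2,3}. \<Sum>c2\<in>{1::nat,2,3}. (if b2 = c2 \<and> b = c then 1 else 0) * (f c c2::complex)) = f b b2"
  using assms by (auto simp: sum3)

lemma RTT:
  assumes "s \<noteq> 0" "q = s^2" "z = q \<or> z = - (q^3)"
  shows "a \<in> {1,2,3} \<Longrightarrow> a2 \<in> {1,2,3} \<Longrightarrow> b \<in> {1,2,3} \<Longrightarrow> b2 \<in> {1,2,3} \<Longrightarrow>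
    xs \<in> states (length mus) \<Longrightarrow> ys \<in> states (length mus) \<Longrightarrow>
    (\<Sum>c\<in>{1,2,3}. \<Sum>c2\<in>{1,2,3}. Rent q s z (lam - mu) a a2 c c2 * MM q s z mus lam mu c c2 b b2 xs ys) =
    (\<Sum>c\<in>{1,2,3}. \<Sum>c2\<in>{1,2,3}. MM q s z mus mu lam a2 a c2 c xs ys * Rent q s z (lam - mu) c c2 b b2)"
proof (induction mus arbitrary: a a2 b b2 xs ys)
  case Nil
  then have "xs = []" "ys = []" by (auto simp: states_def)
  then show ?case using Nil by (simp only: MM_Nil delta2)
next
  case (Cons nu ms)
  let ?I = "{1::nat,2,3}"
  let ?R = "\<lambda>c c2 g g2. Rent q s z (lam - mu) c c2 g g2"
  obtain i xs1 where xs: "xs = i # xs1" "i \<in> ?I" "xs1 \<in> states (length ms)"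
    using Cons.prems(5) by (cases xs) (auto simp: states_def)
  obtain j ys1 where ys: "ys = j # ys1" "j \<in> ?I" "ys1 \<in> states (length ms)"
    using Cons.prems(6) by (cases ys) (auto simp: states_def)
  have "(\<Sum>c\<in>?I. \<Sum>c2\<in>?I. ?R a a2 c c2 * MM q s z (nu # ms) lam mu c c2 b b2 xs ys) =
        (\<Sum>c\<in>?I. \<Sum>c2\<in>?I. ?R a a2 c c2 * (\<Sum>g\<in>?I. \<Sum>g2\<in>?I. WW q s z lam mu nu c c2 i j g g2 * MM q s z ms lam mu g g2 b b2 xs1 ys1))"
    unfolding xs ys MM_cons ..
  also have "\<dots> = (\<Sum>g\<in>?I. \<Sum>g2\<in>?I. (\<Sum>c\<in>?I. \<Sum>c2\<in>?I. ?R a a2 c c2 * WW q s z lam mu nu c c2 i j g g2) * MM q s z ms lam mu g g2 b b2 xs1 ys1)"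
    by (rule rearrX)
  also have "\<dots> = (\<Sum>g\<in>?I. \<Sum>g2\<in>?I. (\<Sum>c\<in>?I. \<Sum>c2\<in>?I. WW q s z mu lam nu a2 a i j c2 c * ?R c c2 g g2) * MM q s z ms lam mu g g2 b b2 xs1 ys1)"
    apply (intro sum.cong refl)
    apply (subst ybeR[OF assms])
    using Cons.prems xs ys apply blast+
    done
  also have "\<dots> = (\<Sum>c\<in>?I. \<Sum>c2\<in>?I. WW q s z mu lam nu a2 a i j c2 c * (\<Sum>g\<in>?I. \<Sum>g2\<in>?I. ?R c c2 g g2 * MM q s z ms lam mu g g2 b b2 xs1 ys1))"
    by (rule rearrX[symmetric])
  also have "\<dots> = (\<Sum>c\<in>?I. \<Sum>c2\<in>?I. WW q s z mu lam nu a2 a i j c2 c * (\<Sum>h\<in>?I. \<Sum>h2\<in>?I. MM q s z ms mu lam c2 c h2 h xs1 ys1 * ?R h h2 b b2))"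
    apply (intro sum.cong refl)
    apply (subst Cons.IH)
    using Cons.prems xs ys apply auto
    done
  also have "\<dots> = (\<Sum>h\<in>?I. \<Sum>h2\<in>?I. (\<Sum>c\<in>?I. \<Sum>c2\<in>?I. WW q s z mu lam nu a2 a i j c2 c * MM q s z ms mu lam c2 c h2 h xs1 ys1) * ?R h h2 b b2)"
    by (rule rearrX)
  also have "\<dots> = (\<Sum>h\<in>?I. \<Sum>h2\<in>?I. MM q s z (nu # ms) mu lam a2 a h2 h xs ys * ?R h h2 b b2)"
    unfolding xs ys MM_cons' ..
  finally show ?case .
qed

lemma RE_row1:
  "RE q s z x 1 1 1 1 = (x - z) * (x - q^2)"
  "RE q s z x 1 1 1 2 = 0"
  "RE q s z x 1 1 1 3 = 0"
  "RE q s z x 1 1 2 1 = 0"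
  "RE q s z x 1 1 2 2 = 0"
  "RE q s z x 1 1 2 3 = 0"
  "RE q s z x 1 1 3 1 = 0"
  "RE q s z x 1 1 3 2 = 0"
  "RE q s z x 1 1 3 3 = 0"
  by (simp_all add: RE_def RX_def Let_def)

lemma RE_col9:
  "RE q s z x 1 1 3 3 = 0"
  "RE q s z x 1 2 3 3 = 0"
  "RE q s z x 1 3 3 3 = 0"
  "RE q s z x 2 1 3 3 = 0"
  "RE q s z x 2 2 3 3 = 0"
  "RE q s z x 2 3 3 3 = 0"
  "RE q s z x 3 1 3 3 = 0"
  "RE q s z x 3 2 3 3 = 0"
  "RE q s z x 3 3 3 3 = (x - z) * (x - q^2)"
  by (simp_all add: RE_def RX_def Let_def)

lemma comm_weak:
  assumes "s \<noteq> 0" "q = s^2" "z = q \<or> z = - (q^3)"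
    "xs \<in> states (length mus)" "ys \<in> states (length mus)"
  shows "(exp (2*(lam-mu)) - z) * (exp (2*(lam-mu)) - q^2) * MM q s z mus lam mu 1 1 3 3 xs ys =
         (exp (2*(lam-mu)) - z) * (exp (2*(lam-mu)) - q^2) * MM q s z mus mu lam 1 1 3 3 xs ys"
proof -
  let ?x = "exp (2*(lam-mu))"
  have r: "(\<Sum>c\<in>{1,2,3}. \<Sum>c2\<in>{1,2,3}. Rent q s z (lam - mu) 1 1 c c2 * MM q s z mus lam mu c c2 3 3 xs ys) =
    (\<Sum>c\<in>{1,2,3}. \<Sum>c2\<in>{1,2,3}. MM q s z mus mu lam 1 1 c2 c xs ys * Rent q s z (lam - mu) c c2 3 3)"
    by (rule RTT[OF assms(1-3)]) (use assms(4,5) in auto)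
  have l: "(\<Sum>c\<in>{1::nat,2,3}. \<Sum>c2\<in>{1::nat,2,3}. Rent q s z (lam - mu) 1 1 c c2 * MM q s z mus lam mu c c2 3 3 xs ys)
     = (?x - z) * (?x - q^2) * MM q s z mus lam mu 1 1 3 3 xs ys"
    by (simp only: sum3 Rent_RE RE_row1 mult_zero_left mult_zero_right add_0_left add_0_right)
  have rr: "(\<Sum>c\<in>{1::nat,2,3}. \<Sum>c2\<in>{1::nat,2,3}. MM q s z mus mu lam 1 1 c2 c xs ys * Rent q s z (lam - mu) c c2 3 3)
     = (?x - z) * (?x - q^2) * MM q s z mus mu lam 1 1 3 3 xs ys"
    by (simp only: sum3 Rent_RE RE_col9 mult_zero_left mult_zero_right add_0_left add_0_right mult.commute)
  show ?thesis using r l rr by simp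
qed


lemma MM_poly1: "MM q s z mus lam mu 1 1 3 3 xs ys =
   poly (\<Sum>ks\<in>states (length mus). smult (Tmono q s z mu mus 1 3 ks ys) (TPoly q s z mus 1 3 xs ks)) (exp (2*lam))"
  unfolding MM_def poly_sum poly_smult Tmono_poly[of q s z lam]
  by (rule sum.cong[OF refl]) (rule mult.commute)

lemma MM_poly2: "MM q s z mus mu lam 1 1 3 3 xs ys =
   poly (\<Sum>ks\<in>states (length mus). smult (Tmono q s z mu mus 1 3 xs ks) (TPoly q s z mus 1 3 ks ys)) (exp (2*lam))"
  unfolding MM_def poly_sum poly_smult Tmono_poly[of q s z lam] ..

lemma poly_zero_nonzero:
  fixes p :: "complex poly"
  assumes "\<And>X. X \<noteq> 0 \<Longrightarrow> poly p X = 0"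
  shows "p = 0"
proof (rule ccontr)
  assume "p \<noteq> 0"
  then have fin: "finite {x. poly p x = 0}" by (rule poly_roots_finite)
  have "{x::complex. x \<noteq> 0} \<subseteq> {x. poly p x = 0}" using assms by auto
  then have "finite {x::complex. x \<noteq> 0}" using fin finite_subset by blast
  then have "finite (insert 0 {x::complex. x \<noteq> 0})" by simp
  moreover have "insert 0 {x::complex. x \<noteq> 0} = UNIV" by auto
  ultimately show False using infinite_UNIV_char_0 by (metis)
qed

lemma exp_surj: "(X::complex) \<noteq> 0 \<Longrightarrow> \<exists>w. exp w = X"
proof -
  assume X: "X \<noteq> 0"
  have "X = complex_of_real (cmod X) * cis (Arg X)" using rcis_cmod_Arg[of X] by (simp add: rcis_def)
  also have "complex_of_real (cmod X) = exp (complex_of_real (ln (cmod X)))" using X by (simp add: exp_of_real)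
  also have "cis (Arg X) = exp (\<i> * complex_of_real (Arg X))" by (rule cis_conv_exp)
  finally have "X = exp (complex_of_real (ln (cmod X)) + \<i> * complex_of_real (Arg X))" by (simp add: mult_exp_exp)
  then show ?thesis by (rule exI[of _ "complex_of_real (ln (cmod X)) + \<i> * complex_of_real (Arg X)", OF sym])
qed

lemma comm_full:
  assumes "s \<noteq> 0" "q = s^2" "z = q \<or> z = - (q^3)"
    "xs \<in> states (length mus)" "ys \<in> states (length mus)"
  shows "MM q s z mus lam mu 1 1 3 3 xs ys = MM q s z mus mu lam 1 1 3 3 xs ys"
proof -
  define w where "w = exp (-2*mu)"
  define P1 where "P1 = (\<Sum>ks\<in>states (length mus). smult (Tmono q s z mu mus 1 3 ks ys) (TPoly q s z mus 1 3 xs ks))"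
  define P2 where "P2 = (\<Sum>ks\<in>states (length mus). smult (Tmono q s z mu mus 1 3 xs ks) (TPoly q s z mus 1 3 ks ys))"
  define A where "A = [:-z, w:] * [:-(q^2), w:]"
  have polyA: "poly A X = (w*X - z) * (w*X - q^2)" for X
    by (simp add: A_def algebra_simps)
  have "poly (A * (P1 - P2)) X = 0" if X: "X \<noteq> 0" for X
  proof -
    obtain w0 where w0: "exp w0 = X" using exp_surj[OF X] by blast
    define l :: complex where "l = w0 / 2"
    have el: "exp (2*l) = X" using w0 by (simp add: l_def)
    have x: "exp (2*(l - mu)) = w * X" unfolding exp_diff2 w_def el ..
    have "(exp (2*(l-mu)) - z) * (exp (2*(l-mu)) - q^2) * MM q s z mus l mu 1 1 3 3 xs ys =
          (exp (2*(l-mu)) - z) * (exp (2*(l-mu)) - q^2) * MM q s z mus mu l 1 1 3 3 xs ys"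
      by (rule comm_weak[OF assms])
    then have "poly A X * poly P1 X = poly A X * poly P2 X"
      unfolding x polyA MM_poly1[of q s z mus l mu xs ys] MM_poly2[of q s z mus mu l xs ys] P1_def P2_def el .
    then show ?thesis by (simp add: algebra_simps)
  qed
  then have "A * (P1 - P2) = 0" by (rule poly_zero_nonzero)
  moreover have "A \<noteq> 0" unfolding A_def using w_def by simp
  ultimately have "P1 = P2" by simp
  then show ?thesis unfolding MM_poly1[of q s z mus lam mu xs ys] MM_poly2[of q s z mus mu lam xs ys] P1_def P2_def by simp
qed

lemma applyE2:
  "applyE q s z mus mu (applyE q s z mus lam v) xs = (\<Sum>ks\<in>states (length mus). MM q s z mus mu lam 1 1 3 3 xs ks * v ks)"
proof -
  let ?S = "states (length mus)"
  let ?T = "\<lambda>l a b. Tmono q s z l mus 1 3 a b"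
  have "applyE q s z mus mu (applyE q s z mus lam v) xs = (\<Sum>ys\<in>?S. ?T mu xs ys * (\<Sum>ks\<in>?S. ?T lam ys ks * v ks))"
    unfolding applyE_def ..
  also have "\<dots> = (\<Sum>ys\<in>?S. \<Sum>ks\<in>?S. ?T mu xs ys * ?T lam ys ks * v ks)"
    by (simp add: sum_distrib_left mult.assoc)
  also have "\<dots> = (\<Sum>ks\<in>?S. \<Sum>ys\<in>?S. ?T mu xs ys * ?T lam ys ks * v ks)"
    by (rule sum.swap)
  also have "\<dots> = (\<Sum>ks\<in>?S. MM q s z mus mu lam 1 1 3 3 xs ks * v ks)"
    unfolding MM_def by (simp add: sum_distrib_right)
  finally show ?thesis .
qed

lemma applyE_comm:
  assumes "s \<noteq> 0" "q = s^2" "z = q \<or> z = - (q^3)" "xs \<in> states (length mus)"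
  shows "applyE q s z mus mu (applyE q s z mus lam v) xs = applyE q s z mus lam (applyE q s z mus mu v) xs"
  unfolding applyE2
proof (rule sum.cong[OF refl])
  fix ks assume ks: "ks \<in> states (length mus)"
  show "MM q s z mus mu lam 1 1 3 3 xs ks * v ks = MM q s z mus lam mu 1 1 3 3 xs ks * v ks"
    using comm_full[OF assms(1-4) ks, of lam mu] by simp
qed

lemma applyE_agree:
  "(\<And>xs. xs \<in> states (length mus) \<Longrightarrow> v xs = w xs) \<Longrightarrow> applyE q s z mus lam v = applyE q s z mus lam w"
  unfolding applyE_def by (intro ext sum.cong refl) simp

lemma Fold_Cons: "Fold q s z mus (l # ls) v = Fold q s z mus ls (applyE q s z mus l v)"
  by (simp add: Fold_def)

lemma Fold_append: "Fold q s z mus (as @ bs) v = Fold q s z mus bs (Fold q s z mus as v)"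
  by (simp add: Fold_def)

lemma Fold_agree:
  "(\<And>xs. xs \<in> states (length mus) \<Longrightarrow> v xs = w xs) \<Longrightarrow> xs \<in> states (length mus) \<Longrightarrow>
   Fold q s z mus ls v xs = Fold q s z mus ls w xs"
proof (induction ls arbitrary: v w)
  case Nil
  then show ?case by (simp add: Fold_def)
next
  case (Cons l ls)
  have "applyE q s z mus l v = applyE q s z mus l w" by (rule applyE_agree) (use Cons.prems in auto)
  then show ?case by (simp add: Fold_Cons)
qed

lemma Fold_move:
  assumes "s \<noteq> 0" "q = s^2" "z = q \<or> z = - (q^3)"
  shows "xs \<in> states (length mus) \<Longrightarrow>
    Fold q s z mus ls (applyE q s z mus x v) xs = applyE q s z mus x (Fold q s z mus ls v) xs"
proof (induction ls arbitrary: v xs)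
  case Nil
  then show ?case by (simp add: Fold_def)
next
  case (Cons l ls)
  have "Fold q s z mus (l # ls) (applyE q s z mus x v) xs
        = Fold q s z mus ls (applyE q s z mus l (applyE q s z mus x v)) xs"
    by (simp add: Fold_Cons)
  also have "\<dots> = Fold q s z mus ls (applyE q s z mus x (applyE q s z mus l v)) xs"
    by (rule Fold_agree) (use applyE_comm[OF assms] Cons.prems in auto)
  also have "\<dots> = applyE q s z mus x (Fold q s z mus ls (applyE q s z mus l v)) xs"
    by (rule Cons.IH[OF Cons.prems])
  also have "\<dots> = applyE q s z mus x (Fold q s z mus (l # ls) v) xs"
    by (simp add: Fold_Cons)
  finally show ?case .
qed

lemma Fold_perm:
  assumes "s \<noteq> 0" "q = s^2" "z = q \<or> z = - (q^3)"
  shows "mset ls = mset ls' \<Longrightarrow> xs \<in> states (length mus) \<Longrightarrow>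
    Fold q s z mus ls v xs = Fold q s z mus ls' v xs"
proof (induction ls arbitrary: ls' v xs)
  case Nil
  then show ?case by simp
next
  case (Cons x ls)
  have "x \<in> set ls'" using Cons.prems(1) by (metis list.set_intros(1) set_mset_mset)
  then obtain ys1 ys2 where ls': "ls' = ys1 @ x # ys2" by (meson split_list)
  have m: "mset ls = mset (ys1 @ ys2)" using Cons.prems(1) ls' by simp
  have "Fold q s z mus (x # ls) v xs = Fold q s z mus ls (applyE q s z mus x v) xs"
    by (simp add: Fold_Cons)
  also have "\<dots> = Fold q s z mus (ys1 @ ys2) (applyE q s z mus x v) xs"
    by (rule Cons.IH[OF m Cons.prems(2)])
  also have "\<dots> = Fold q s z mus ys2 (Fold q s z mus ys1 (applyE q s z mus x v)) xs"
    by (simp add: Fold_append)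
  also have "\<dots> = Fold q s z mus ys2 (applyE q s z mus x (Fold q s z mus ys1 v)) xs"
    by (rule Fold_agree) (use Fold_move[OF assms] Cons.prems(2) in auto)
  also have "\<dots> = Fold q s z mus ls' v xs"
    by (simp add: ls' Fold_append Fold_Cons)
  finally show ?case .
qed

theorem lemma2p1:
  fixes q s z :: complex and L :: nat and mus :: "complex list"
  assumes "q \<noteq> 0" and "s\<^sup>2 = q" and "z = q \<or> z = - (q^3)"
    and "L \<ge> 1" and "length mus = L"
  shows "(\<exists>c :: (nat \<Rightarrow> nat) \<Rightarrow> complex.
            \<forall>lams. length lams = L \<longrightarrow>
              Zpart q s z mus lams =
                (\<Sum>e\<in>PiE {..<L} (\<lambda>_. {..2 * L - 1}).
                    c e * (\<Prod>i<L. exp (2 * lams ! i) ^ e i)))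
       \<and> (\<forall>lams lams'. length lams = L \<longrightarrow> mset lams' = mset lams \<longrightarrow>
              Zpart q s z mus lams' = Zpart q s z mus lams)"
proof
  have s0: "s \<noteq> 0" using assms(1,2) by auto
  have qs: "q = s^2" using assms(2) by simp
  define v0 where "v0 = (\<lambda>js. if js = replicate (length mus) (1::nat) then (1::complex) else 0)"
  have Z: "Zpart q s z mus lams = Fold q s z mus lams v0 (replicate L 3)" for lams
    unfolding Zpart_def Fold_def v0_def using assms(5) by simp
  have rep: "replicate L 3 \<in> states L" unfolding states_def by auto
  obtain c where c: "\<forall>lams. length lams = L \<longrightarrow> (\<forall>xs\<in>states L. Fold q s z mus lams v0 xs =
           (\<Sum>e\<in>PiE {..<L} (\<lambda>_. {..2*L-1}). c xs e * (\<Prod>i<L. exp (2 * lams ! i) ^ e i)))"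
    using V_rep[OF assms(5,4)] by blast
  show "\<exists>c :: (nat \<Rightarrow> nat) \<Rightarrow> complex.
            \<forall>lams. length lams = L \<longrightarrow>
              Zpart q s z mus lams =
                (\<Sum>e\<in>PiE {..<L} (\<lambda>_. {..2 * L - 1}).
                    c e * (\<Prod>i<L. exp (2 * lams ! i) ^ e i))"
    by (rule exI[of _ "c (replicate L 3)"]) (use c rep Z in auto)
  show "\<forall>lams lams'. length lams = L \<longrightarrow> mset lams' = mset lams \<longrightarrow>
              Zpart q s z mus lams' = Zpart q s z mus lams"
  proof (intro allI impI)
    fix lams lams' :: "complex list"
    assume "length lams = L" "mset lams' = mset lams"
    then show "Zpart q s z mus lams' = Zpart q s z mus lams"
      unfolding Z using Fold_perm[OF s0 qs assms(3)] rep assms(5) by metis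
  qed
qed

end
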